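(* Let $A$ be a closed densely defined operator in $\mathcal H$ and $G$ a bounded metric operator in $\mathcal H$ (with $G^{-1}$ possibly unbounded). Consider the conditions: (i) $GD(A)=D(A^* )$ and $A^*G\xi=GA\xi$ for every $\xi\in D(A)$; (ii) the operator $G^{1/2}AG^{-1/2}$, with domain $G^{1/2}D(A)$, is self-adjoint in $\mathcal H$; (iii) $A$ is self-adjoint in $\mathcal H(G)$; (iv) $GD(A)=D(G^{-1}A^* )$ and $A^*G\xi=GA\xi$ for every $\xi\in D(A)$. Then (i) $\Rightarrow$ (ii) $\Rightarrow$ (iii) $\Rightarrow$ (iv). If moreover the range $R(A^* )$ is contained in $D(G^{-1})$, then (i)–(iv) are equivalent.
   Context: A metric operator in $\mathcal H$ is a self-adjoint operator $G$ with $\langle G\xi,\xi\rangle>0$ for all nonzero $\xi\in D(G)$; $G^{-1}$, $G^{-1/2}$ denote the (possibly unbounded) inverses of $G$, $G^{1/2}$. For bounded metric $G$, $\mathcal H(G)$ is the completion of $\mathcal H$ under $\|\xi\|_G=\|G^{1/2}\xi\|$ with inner product $\langle\xi,\eta\rangle_G=\langle G^{1/2}\xi,G^{1/2}\eta\rangle$; $D(A)$ is dense in $\mathcal H(G)$, and "$A$ is self-adjoint in $\mathcal H(G)$" means $A=A^\#$, where $A^\#$ is the adjoint in $\mathcal H(G)$ of $A$ viewed as an operator in $\mathcal H(G)$ with domain $D(A)$. $D(G^{-1}A^* )=\{\zeta\in D(A^* ): A^*\zeta\in D(G^{-1})\}$. *)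

theory Defs
  imports "HOL-Analysis.Analysis"
begin

text \<open>The library has no complex inner product spaces, so we introduce a class of
complex Hilbert spaces: a complete real normed vector space with a complex scalar
multiplication extending the real one and a complex inner product (conjugate-linear
in the first argument) inducing the norm.\<close>

class complex_hilbert = real_normed_vector + complete_space +
  fixes scaleC :: "complex \<Rightarrow> 'a \<Rightarrow> 'a"
    and cinner :: "'a \<Rightarrow> 'a \<Rightarrow> complex"
  assumes scaleC_add_right: "scaleC c (x + y) = scaleC c x + scaleC c y"
    and scaleC_add_left: "scaleC (b + c) x = scaleC b x + scaleC c x"
    and scaleC_scaleC: "scaleC b (scaleC c x) = scaleC (b * c) x"
    and scaleC_one: "scaleC 1 x = x"
    and scaleR_scaleC: "scaleR r x = scaleC (complex_of_real r) x"
    and cinner_commute: "cinner x y = cnj (cinner y x)"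
    and cinner_add_left: "cinner (x + y) z = cinner x z + cinner y z"
    and cinner_scaleC_left: "cinner (scaleC c x) y = cnj c * cinner x y"
    and cinner_pos: "x \<noteq> 0 \<Longrightarrow> 0 < Re (cinner x x)"
    and norm_eq_sqrt_cinner: "norm x = sqrt (Re (cinner x x))"

text \<open>Sanity check: the class is consistent (\<open>\<complex>\<close> is an instance).\<close>
instantiation complex :: complex_hilbert
begin
definition scaleC_complex :: "complex \<Rightarrow> complex \<Rightarrow> complex" where
  "scaleC_complex c x = c * x"
definition cinner_complex :: "complex \<Rightarrow> complex \<Rightarrow> complex" where
  "cinner_complex x y = cnj x * y"
instance
proof
  fix x y z :: complex and b c :: complex and r :: real
  show "scaleC c (x + y) = scaleC c x + scaleC c y" by (simp add: scaleC_complex_def algebra_simps)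
  show "scaleC (b + c) x = scaleC b x + scaleC c x" by (simp add: scaleC_complex_def algebra_simps)
  show "scaleC b (scaleC c x) = scaleC (b * c) x" by (simp add: scaleC_complex_def algebra_simps)
  show "scaleC 1 x = x" by (simp add: scaleC_complex_def)
  show "scaleR r x = scaleC (complex_of_real r) x" by (simp add: scaleC_complex_def scaleR_conv_of_real)
  show "cinner x y = cnj (cinner y x)" by (simp add: cinner_complex_def)
  show "cinner (x + y) z = cinner x z + cinner y z" by (simp add: cinner_complex_def algebra_simps)
  show "cinner (scaleC c x) y = cnj c * cinner x y" by (simp add: cinner_complex_def scaleC_complex_def)
  show "x \<noteq> 0 \<Longrightarrow> 0 < Re (cinner x x)"
    by (simp add: cinner_complex_def complex_eq_iff) (metis not_real_square_gt_zero add_pos_nonneg add_nonneg_pos zero_le_square)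
  show "norm x = sqrt (Re (cinner x x))"
    by (simp add: cinner_complex_def cmod_def power2_eq_square)
qed
end

text \<open>An operator in \<open>\<H>\<close> is a pair (domain \<open>D\<close>, map \<open>f\<close>), only the values on \<open>D\<close> matter.\<close>

definition csubspace :: "'a::complex_hilbert set \<Rightarrow> bool" where
  "csubspace D \<longleftrightarrow> 0 \<in> D \<and> (\<forall>x\<in>D. \<forall>y\<in>D. x + y \<in> D) \<and> (\<forall>x\<in>D. \<forall>c. scaleC c x \<in> D)"

definition linear_op :: "'a::complex_hilbert set \<Rightarrow> ('a \<Rightarrow> 'a) \<Rightarrow> bool" where
  "linear_op D f \<longleftrightarrow> csubspace D \<and> (\<forall>x\<in>D. \<forall>y\<in>D. f (x + y) = f x + f y)
     \<and> (\<forall>x\<in>D. \<forall>c. f (scaleC c x) = scaleC c (f x))"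

definition densely_defined :: "'a::complex_hilbert set \<Rightarrow> bool" where
  "densely_defined D \<longleftrightarrow> closure D = UNIV"

definition op_graph :: "'a set \<Rightarrow> ('a \<Rightarrow> 'a) \<Rightarrow> ('a \<times> 'a) set" where
  "op_graph D f = {(x, f x) | x. x \<in> D}"

definition closed_op :: "'a::complex_hilbert set \<Rightarrow> ('a \<Rightarrow> 'a) \<Rightarrow> bool" where
  "closed_op D f \<longleftrightarrow> linear_op D f \<and> closed (op_graph D f)"

definition adj_graph :: "'a::complex_hilbert set \<Rightarrow> ('a \<Rightarrow> 'a) \<Rightarrow> ('a \<times> 'a) set" where
  "adj_graph D f = {(\<eta>, \<zeta>). \<forall>\<xi>\<in>D. cinner (f \<xi>) \<eta> = cinner \<xi> \<zeta>}"

definition adj_dom :: "'a::complex_hilbert set \<Rightarrow> ('a \<Rightarrow> 'a) \<Rightarrow> 'a set" where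
  "adj_dom D f = Domain (adj_graph D f)"

definition adj :: "'a::complex_hilbert set \<Rightarrow> ('a \<Rightarrow> 'a) \<Rightarrow> 'a \<Rightarrow> 'a" where
  "adj D f \<eta> = (THE \<zeta>. (\<eta>, \<zeta>) \<in> adj_graph D f)"

definition self_adjoint :: "'a::complex_hilbert set \<Rightarrow> ('a \<Rightarrow> 'a) \<Rightarrow> bool" where
  "self_adjoint D f \<longleftrightarrow> densely_defined D \<and> adj_graph D f = op_graph D f"

definition bounded_clinear_op :: "('a::complex_hilbert \<Rightarrow> 'a) \<Rightarrow> bool" where
  "bounded_clinear_op G \<longleftrightarrow> linear_op UNIV G \<and> (\<exists>K. \<forall>x. norm (G x) \<le> norm x * K)"

definition bounded_metric_op :: "('a::complex_hilbert \<Rightarrow> 'a) \<Rightarrow> bool" where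
  "bounded_metric_op G \<longleftrightarrow> bounded_clinear_op G \<and> (\<forall>x y. cinner (G x) y = cinner x (G y))
     \<and> (\<forall>x. x \<noteq> 0 \<longrightarrow> 0 < Re (cinner (G x) x))"

definition op_sqrt :: "('a::complex_hilbert \<Rightarrow> 'a) \<Rightarrow> 'a \<Rightarrow> 'a" where
  "op_sqrt G = (THE S. bounded_clinear_op S \<and> (\<forall>x y. cinner (S x) y = cinner x (S y))
      \<and> (\<forall>x. 0 \<le> Re (cinner (S x) x)) \<and> (\<forall>x. S (S x) = G x))"

text \<open>\<open>D(G\<^sup>-\<^sup>1) = R(G)\<close>, and \<open>D(G\<^sup>-\<^sup>1A\<^sup>*) = {\<zeta> \<in> D(A\<^sup>*). A\<^sup>*\<zeta> \<in> D(G\<^sup>-\<^sup>1)}\<close>.\<close>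
definition dom_Ginv_adj :: "('a::complex_hilbert \<Rightarrow> 'a) \<Rightarrow> 'a set \<Rightarrow> ('a \<Rightarrow> 'a) \<Rightarrow> 'a set" where
  "dom_Ginv_adj G D f = {\<zeta> \<in> adj_dom D f. adj D f \<zeta> \<in> range G}"

text \<open>\<open>\<H>(G)\<close> is the completion of \<open>\<H>\<close> under \<open>\<parallel>\<xi>\<parallel>\<^sub>G = \<parallel>G\<^sup>1\<^sup>/\<^sup>2\<xi>\<parallel>\<close>.
We realise it concretely: its elements are represented by \<open>\<parallel>\<cdot>\<parallel>\<^sub>G\<close>-Cauchy sequences in \<open>\<H>\<close>,
two sequences representing the same element iff their difference tends to 0 in \<open>\<parallel>\<cdot>\<parallel>\<^sub>G\<close>;
\<open>\<H>\<close> embeds via constant sequences, and the inner product is the limit of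
\<open>\<langle>\<cdot>,\<cdot>\<rangle>\<^sub>G\<close>.\<close>

definition ginner :: "('a::complex_hilbert \<Rightarrow> 'a) \<Rightarrow> 'a \<Rightarrow> 'a \<Rightarrow> complex" where
  "ginner G x y = cinner (op_sqrt G x) (op_sqrt G y)"

definition gcauchy :: "('a::complex_hilbert \<Rightarrow> 'a) \<Rightarrow> (nat \<Rightarrow> 'a) \<Rightarrow> bool" where
  "gcauchy G x \<longleftrightarrow> Cauchy (\<lambda>n. op_sqrt G (x n))"

definition gequiv :: "('a::complex_hilbert \<Rightarrow> 'a) \<Rightarrow> (nat \<Rightarrow> 'a) \<Rightarrow> (nat \<Rightarrow> 'a) \<Rightarrow> bool" where
  "gequiv G x y \<longleftrightarrow> (\<lambda>n. op_sqrt G (x n - y n)) \<longlonglongrightarrow> 0"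

definition gadj_graph :: "('a::complex_hilbert \<Rightarrow> 'a) \<Rightarrow> 'a set \<Rightarrow> ('a \<Rightarrow> 'a)
    \<Rightarrow> ((nat \<Rightarrow> 'a) \<times> (nat \<Rightarrow> 'a)) set" where
  "gadj_graph G D f = {(\<eta>, \<zeta>). gcauchy G \<eta> \<and> gcauchy G \<zeta> \<and>
     (\<forall>\<xi>\<in>D. lim (\<lambda>n. ginner G (f \<xi>) (\<eta> n)) = lim (\<lambda>n. ginner G \<xi> (\<zeta> n)))}"

text \<open>\<open>A = A\<^sup>#\<close> in \<open>\<H>(G)\<close>: the graph of \<open>A\<^sup>#\<close> equals the (embedded) graph of \<open>A\<close>, modulo
the identification of representatives.\<close>
definition self_adjoint_in_HG :: "('a::complex_hilbert \<Rightarrow> 'a) \<Rightarrow> 'a set \<Rightarrow> ('a \<Rightarrow> 'a) \<Rightarrow> bool" where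
  "self_adjoint_in_HG G D f \<longleftrightarrow>
     (\<forall>\<xi>\<in>D. ((\<lambda>_. \<xi>), (\<lambda>_. f \<xi>)) \<in> gadj_graph G D f) \<and>
     (\<forall>\<eta> \<zeta>. (\<eta>, \<zeta>) \<in> gadj_graph G D f \<longrightarrow>
        (\<exists>\<xi>\<in>D. gequiv G \<eta> (\<lambda>_. \<xi>) \<and> gequiv G \<zeta> (\<lambda>_. f \<xi>)))"

end

theory Submission
  imports Defs
begin


lemma scaleC_zero_right[simp]: "scaleC c (0::'a::complex_hilbert) = 0"
  using scaleC_add_right[of c "0::'a" 0] by simp

lemma scaleC_zero_left[simp]: "scaleC 0 (x::'a::complex_hilbert) = 0"
  using scaleR_scaleC[of 0 x] by simp

lemma scaleC_minus_one: "scaleC (-1) (x::'a::complex_hilbert) = - x"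
  using scaleR_scaleC[of "-1" x] by simp

lemma scaleC_minus_right: "scaleC c (- (x::'a::complex_hilbert)) = - scaleC c x"
  using scaleC_scaleC[of c "-1" x] scaleC_scaleC[of "-1" c x] by (simp add: scaleC_minus_one)

lemma scaleC_diff_right: "scaleC c ((x::'a::complex_hilbert) - y) = scaleC c x - scaleC c y"
  using scaleC_add_right[of c x "-y"] by (simp add: scaleC_minus_right)

lemma scaleC_minus_left: "scaleC (- c) (x::'a::complex_hilbert) = - scaleC c x"
  using scaleC_scaleC[of "-1" c x] by (simp add: scaleC_minus_one)

lemma scaleC_diff_left: "scaleC (b - c) (x::'a::complex_hilbert) = scaleC b x - scaleC c x"
  using scaleC_add_left[of b "-c" x] by (simp add: scaleC_minus_left)

lemma cinner_add_right: "cinner (x::'a::complex_hilbert) (y + z) = cinner x y + cinner x z"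
  using cinner_commute[of x "y+z"] cinner_commute[of y x] cinner_commute[of z x] cinner_add_left[of y z x] by simp

lemma cinner_scaleC_right: "cinner (x::'a::complex_hilbert) (scaleC c y) = c * cinner x y"
  using cinner_commute[of x "scaleC c y"] cinner_commute[of y x] cinner_scaleC_left[of c y x] by simp

lemma cinner_zero_left[simp]: "cinner 0 (y::'a::complex_hilbert) = 0"
  using cinner_add_left[of "0::'a" 0 y] by simp

lemma cinner_zero_right[simp]: "cinner (x::'a::complex_hilbert) 0 = 0"
  using cinner_add_right[of x "0::'a" 0] by simp

lemma cinner_minus_left: "cinner (- x) (y::'a::complex_hilbert) = - cinner x y"
proof -
  have h: "cinner x y + cinner (-x) y = 0" using cinner_add_left[of x "-x" y] by simp
  have "cinner (-x) y = (cinner x y + cinner (-x) y) - cinner x y" by simp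
  also have "\<dots> = - cinner x y" by (simp only: h) simp
  finally show ?thesis .
qed

lemma cinner_minus_right: "cinner (x::'a::complex_hilbert) (- y) = - cinner x y"
proof -
  have h: "cinner x y + cinner x (-y) = 0" using cinner_add_right[of x y "-y"] by simp
  have "cinner x (-y) = (cinner x y + cinner x (-y)) - cinner x y" by simp
  also have "\<dots> = - cinner x y" by (simp only: h) simp
  finally show ?thesis .
qed

lemma cinner_diff_left: "cinner (x - y) (z::'a::complex_hilbert) = cinner x z - cinner y z"
  using cinner_add_left[of x "-y" z] by (simp add: cinner_minus_left)

lemma cinner_diff_right: "cinner (x::'a::complex_hilbert) (y - z) = cinner x y - cinner x z"
  using cinner_add_right[of x y "-z"] by (simp add: cinner_minus_right)

lemma cinner_scaleR_left: "cinner (scaleR r x) (y::'a::complex_hilbert) = of_real r * cinner x y"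
  by (simp add: scaleR_scaleC cinner_scaleC_left)

lemma cinner_scaleR_right: "cinner (x::'a::complex_hilbert) (scaleR r y) = of_real r * cinner x y"
  by (simp add: scaleR_scaleC cinner_scaleC_right)

lemma cinner_self_real: "cinner x x = of_real (Re (cinner (x::'a::complex_hilbert) x))"
proof -
  have "Im (cinner x x) = - Im (cinner x x)"
    using arg_cong[OF cinner_commute[of x x], of Im] by simp
  hence "Im (cinner x x) = 0" by simp
  thus ?thesis by (simp add: complex_eq_iff)
qed

lemma Re_cinner_self: "Re (cinner x x) = (norm (x::'a::complex_hilbert))^2"
proof -
  have "0 \<le> Re (cinner x x)" using cinner_pos[of x] by (cases "x = 0") auto
  thus ?thesis by (simp add: norm_eq_sqrt_cinner)
qed

lemma cinner_self: "cinner x x = of_real ((norm (x::'a::complex_hilbert))^2)"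
proof -
  have "cinner x x = of_real (Re (cinner x x))" by (rule cinner_self_real)
  also have "\<dots> = of_real ((norm x)^2)" by (simp only: Re_cinner_self)
  finally show ?thesis .
qed

lemma cinner_self_eq_0[simp]: "cinner x x = 0 \<longleftrightarrow> (x::'a::complex_hilbert) = 0"
  by (simp add: cinner_self)

lemma norm_scaleC: "norm (scaleC c (x::'a::complex_hilbert)) = cmod c * norm x"
proof -
  have "complex_of_real ((norm (scaleC c x))^2) = cinner (scaleC c x) (scaleC c x)" by (simp add: cinner_self)
  also have "\<dots> = (cnj c * c) * cinner x x"
    by (simp add: cinner_scaleC_left cinner_scaleC_right)
  also have "\<dots> = complex_of_real ((cmod c * norm x)^2)"
  proof -
    have "cnj c * c = of_real ((cmod c)^2)" using complex_norm_square[of c] by (simp add: mult.commute)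
    thus ?thesis by (simp add: cinner_self power_mult_distrib)
  qed
  finally have "(norm (scaleC c x))^2 = (cmod c * norm x)^2" by (simp only: of_real_eq_iff)
  thus ?thesis by (rule power2_eq_imp_eq) auto
qed




definition sform :: "('a::complex_hilbert \<Rightarrow> 'a \<Rightarrow> complex) \<Rightarrow> bool" where
  "sform B \<longleftrightarrow> (\<forall>x y z. B (x+y) z = B x z + B y z) \<and> (\<forall>c x y. B (scaleC c x) y = cnj c * B x y)
     \<and> (\<forall>x y. B x y = cnj (B y x)) \<and> (\<forall>x. 0 \<le> Re (B x x))"

lemma sform_real:
  assumes "sform B" shows "B x x = of_real (Re (B x x))"
proof -
  have "B x x = cnj (B x x)" using assms unfolding sform_def by blast
  hence "Im (B x x) = Im (cnj (B x x))" by (rule arg_cong)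
  hence "Im (B x x) = - Im (B x x)" by simp
  hence "Im (B x x) = 0" by simp
  thus ?thesis by (simp add: complex_eq_iff)
qed

lemma sform_CS:
  assumes B: "sform B"
  shows "(cmod (B x y))^2 \<le> Re (B x x) * Re (B y y)"
proof -
  have addL: "\<And>x y z. B (x+y) z = B x z + B y z" and scL: "\<And>c x y. B (scaleC c x) y = cnj c * B x y"
    and herm: "\<And>x y. B x y = cnj (B y x)" and pos: "\<And>x. 0 \<le> Re (B x x)"
    using B unfolding sform_def by blast+
  have addR: "B x (y+z) = B x y + B x z" for x y z
    using herm[of x "y+z"] herm[of y x] herm[of z x] addL[of y z x] by simp
  have scR: "B x (scaleC c y) = c * B x y" for c x y
    using herm[of x "scaleC c y"] herm[of y x] scL[of c y x] by simp
  define c where "c = B x y"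
  define q where "q = (cmod c)^2"
  define a where "a = Re (B x x)"
  define b where "b = Re (B y y)"
  have a0: "a \<ge> 0" "b \<ge> 0" using pos unfolding a_def b_def by auto
  have key: "0 \<le> a + 2 * t * q + t^2 * q * b" for t :: real
  proof -
    define z where "z = x + scaleC (of_real t * cnj c) y"
    have "B z z = B x x + of_real t * cnj c * c + cnj (of_real t * cnj c) * B y x
                 + cnj (of_real t * cnj c) * (of_real t * cnj c) * B y y"
      unfolding z_def by (simp add: addL addR scL scR c_def algebra_simps)
    also have "\<dots> = B x x + of_real (2 * t * q) + of_real (t^2 * q) * B y y"
    proof -
      have "B y x = cnj c" unfolding c_def using herm[of y x] by simp
      moreover have "cnj c * c = of_real q" unfolding q_def
        using complex_norm_square[of c] by (simp add: mult.commute)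
      ultimately have cc: "\<And>w. c * (cnj c * w) = of_real q * w"
      proof -
        fix w
        have "c * (cnj c * w) = (cnj c * c) * w" by (simp add: ac_simps)
        thus "c * (cnj c * w) = of_real q * w" using \<open>cnj c * c = of_real q\<close> by simp
      qed
      show ?thesis using \<open>B y x = cnj c\<close> by (simp add: algebra_simps power2_eq_square cc)
    qed
    finally have "Re (B z z) = a + 2 * t * q + t^2 * q * b" by (simp add: a_def b_def)
    thus ?thesis using pos[of z] by simp
  qed
  have q0: "q \<ge> 0" unfolding q_def by simp
  show ?thesis
  proof (cases "q = 0")
    case True thus ?thesis using a0 unfolding q_def c_def a_def b_def by simp
  next
    case False
    hence qp: "q > 0" using q0 by simp
    show ?thesis
    proof (cases "b = 0")
      case True
      have "0 \<le> a + 2 * (-(a+1)/(2*q)) * q" using key[of "-(a+1)/(2*q)"] True by simp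
      also have "\<dots> = -1" using qp by (simp add: field_simps)
      finally show ?thesis by simp
    next
      case False
      hence bp: "b > 0" using a0 by simp
      have "0 \<le> a + 2 * (-1/b) * q + (-1/b)^2 * q * b" by (rule key)
      also have "\<dots> = a - q / b" using bp by (simp add: field_simps power2_eq_square)
      finally have "q \<le> a * b" using bp by (simp add: field_simps)
      thus ?thesis unfolding q_def c_def a_def b_def .
    qed
  qed
qed

lemma sform_cinner: "sform (cinner :: 'a::complex_hilbert \<Rightarrow> 'a \<Rightarrow> complex)"
  unfolding sform_def
  by (intro conjI allI cinner_add_left cinner_scaleC_left cinner_commute) (simp add: Re_cinner_self)

lemma cinner_CS: "cmod (cinner x y) \<le> norm (x::'a::complex_hilbert) * norm y"
proof -
  have "(cmod (cinner x y))^2 \<le> (norm x * norm y)^2"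
    using sform_CS[OF sform_cinner, of x y] by (simp add: Re_cinner_self power_mult_distrib)
  thus ?thesis by (rule power2_le_imp_le) simp
qed

lemma bounded_bilinear_cinner: "bounded_bilinear (cinner :: 'a::complex_hilbert \<Rightarrow> 'a \<Rightarrow> complex)"
proof
  fix a a' b b' :: 'a and r :: real
  show "cinner (a + a') b = cinner a b + cinner a' b" by (rule cinner_add_left)
  show "cinner a (b + b') = cinner a b + cinner a b'" by (rule cinner_add_right)
  show "cinner (r *\<^sub>R a) b = r *\<^sub>R cinner a b" by (simp add: cinner_scaleR_left scaleR_conv_of_real)
  show "cinner a (r *\<^sub>R b) = r *\<^sub>R cinner a b" by (simp add: cinner_scaleR_right scaleR_conv_of_real)
  show "\<exists>K. \<forall>a b. norm (cinner a b) \<le> norm a * norm b * K"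
    by (rule exI[of _ 1]) (simp add: cinner_CS)
qed

lemmas tendsto_cinner = bounded_bilinear.tendsto[OF bounded_bilinear_cinner]

definition lin :: "('a::complex_hilbert \<Rightarrow> 'a) \<Rightarrow> bool" where
  "lin T \<longleftrightarrow> (\<forall>x y. T (x+y) = T x + T y) \<and> (\<forall>c x. T (scaleC c x) = scaleC c (T x))"
definition bnd :: "('a::complex_hilbert \<Rightarrow> 'a) \<Rightarrow> bool" where
  "bnd T \<longleftrightarrow> (\<exists>K. \<forall>x. norm (T x) \<le> norm x * K)"
definition hsym :: "('a::complex_hilbert \<Rightarrow> 'a) \<Rightarrow> bool" where
  "hsym T \<longleftrightarrow> (\<forall>x y. cinner (T x) y = cinner x (T y))"
definition hpos :: "('a::complex_hilbert \<Rightarrow> 'a) \<Rightarrow> bool" where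
  "hpos T \<longleftrightarrow> (\<forall>x. 0 \<le> Re (cinner (T x) x))"

lemma lin_add: "lin T \<Longrightarrow> T (x+y) = T x + T y" unfolding lin_def by auto
lemma lin_scaleC: "lin T \<Longrightarrow> T (scaleC c x) = scaleC c (T x)" unfolding lin_def by auto
lemma lin_scaleR: "lin T \<Longrightarrow> T (scaleR r x) = scaleR r (T x)" by (simp add: scaleR_scaleC lin_scaleC)
lemma lin_zero: "lin T \<Longrightarrow> T 0 = 0" using lin_add[of T 0 0] by simp
lemma lin_minus: "lin T \<Longrightarrow> T (- x) = - T x"
  using lin_scaleC[of T "-1" x] by (simp add: scaleC_minus_one)
lemma lin_diff: "lin T \<Longrightarrow> T (x - y) = T x - T y"
  using lin_add[of T x "-y"] lin_minus[of T y] by simp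

lemma lin_bnd_bounded_linear: "lin T \<Longrightarrow> bnd T \<Longrightarrow> bounded_linear T"
proof -
  assume L: "lin T" and "bnd T"
  then obtain K where K: "\<And>x. norm (T x) \<le> norm x * K" unfolding bnd_def by blast
  show ?thesis
    by (rule bounded_linear_intro[where K=K]) (simp_all add: lin_add[OF L] lin_scaleR[OF L] K)
qed

lemma lin_bnd_tendsto: "lin T \<Longrightarrow> bnd T \<Longrightarrow> (f \<longlongrightarrow> a) F \<Longrightarrow> ((\<lambda>n. T (f n)) \<longlongrightarrow> T a) F"
  using bounded_linear.tendsto[OF lin_bnd_bounded_linear] by blast

lemma hsym_real: "hsym T \<Longrightarrow> cinner (T x) x = of_real (Re (cinner (T x) x))"
proof -
  assume h: "hsym T"
  have "Im (cinner (T x) x) = - Im (cinner (T x) x)"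
  proof -
    have "cinner (T x) x = cinner x (T x)" using h unfolding hsym_def by blast
    also have "\<dots> = cnj (cinner (T x) x)" by (rule cinner_commute)
    finally have "cinner (T x) x = cnj (cinner (T x) x)" .
    hence "Im (cinner (T x) x) = Im (cnj (cinner (T x) x))" by (rule arg_cong)
    thus ?thesis by simp
  qed
  hence "Im (cinner (T x) x) = 0" by simp
  thus ?thesis by (simp add: complex_eq_iff)
qed

lemma pos_sform: "lin T \<Longrightarrow> hsym T \<Longrightarrow> hpos T \<Longrightarrow> sform (\<lambda>x y. cinner (T x) y)"
proof -
  assume L: "lin T" and S: "hsym T" and P: "hpos T"
  show ?thesis unfolding sform_def
  proof (intro conjI allI)
    fix x y z c
    show "cinner (T (x + y)) z = cinner (T x) z + cinner (T y) z" by (simp add: lin_add[OF L] cinner_add_left)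
    show "cinner (T (scaleC c x)) y = cnj c * cinner (T x) y" by (simp add: lin_scaleC[OF L] cinner_scaleC_left)
    have "cinner (T x) y = cinner x (T y)" using S unfolding hsym_def by blast
    thus "cinner (T x) y = cnj (cinner (T y) x)" using cinner_commute[of x "T y"] by simp
    show "0 \<le> Re (cinner (T x) x)" using P unfolding hpos_def by blast
  qed
qed

lemma pos_norm_bound:
  assumes L: "lin T" and S: "hsym T" and P: "hpos T" and M: "\<And>y. norm (T y) \<le> M * norm y"
  shows "(norm (T x))^2 \<le> M * Re (cinner (T x) x)"
proof -
  have cs: "(cmod (cinner (T x) (T x)))^2 \<le> Re (cinner (T x) x) * Re (cinner (T (T x)) (T x))"
    using sform_CS[OF pos_sform[OF L S P], of x "T x"] by simp
  have lhs: "cmod (cinner (T x) (T x)) = (norm (T x))^2" by (simp add: cinner_self norm_power)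
  have r1: "Re (cinner (T (T x)) (T x)) \<le> M * (norm (T x))^2"
  proof -
    have "Re (cinner (T (T x)) (T x)) \<le> cmod (cinner (T (T x)) (T x))" by (rule complex_Re_le_cmod)
    also have "\<dots> \<le> norm (T (T x)) * norm (T x)" by (rule cinner_CS)
    also have "\<dots> \<le> M * norm (T x) * norm (T x)" using M[of "T x"] by (simp add: mult_right_mono)
    finally show ?thesis by (simp add: power2_eq_square mult.assoc)
  qed
  have a0: "0 \<le> Re (cinner (T x) x)" using P unfolding hpos_def by auto
  have "((norm (T x))^2)^2 \<le> Re (cinner (T x) x) * (M * (norm (T x))^2)"
  proof -
    have "((norm (T x))^2)^2 = (cmod (cinner (T x) (T x)))^2" by (simp add: lhs)
    also have "\<dots> \<le> Re (cinner (T x) x) * Re (cinner (T (T x)) (T x))" by (rule cs)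
    also have "\<dots> \<le> Re (cinner (T x) x) * (M * (norm (T x))^2)" by (rule mult_left_mono[OF r1 a0])
    finally show ?thesis .
  qed
  show ?thesis
  proof (cases "norm (T x) = 0")
    case True thus ?thesis by simp
  next
    case False
    define u where "u = (norm (T x))^2"
    have u0: "u > 0" using False unfolding u_def by simp
    have "u * u \<le> (M * Re (cinner (T x) x)) * u"
      using \<open>((norm (T x))^2)^2 \<le> _\<close> unfolding u_def[symmetric] by (simp add: power2_eq_square ac_simps)
    hence "u \<le> M * Re (cinner (T x) x)" using u0 by (rule mult_right_le_imp_le)
    thus ?thesis unfolding u_def .
  qed
qed




fun opL :: "('a::complex_hilbert \<Rightarrow> 'a) \<Rightarrow> real list \<Rightarrow> 'a \<Rightarrow> 'a" where
  "opL C [] x = 0"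
| "opL C (a # p) x = scaleR a x + C (opL C p x)"

fun addL :: "real list \<Rightarrow> real list \<Rightarrow> real list" where
  "addL [] q = q"
| "addL (a # p) q = (case q of [] \<Rightarrow> a # p | b # q' \<Rightarrow> (a + b) # addL p q')"

declare addL.simps(2)[simp del]
lemma addL_Cons_Nil[simp]: "addL (a # p) [] = a # p" by (simp add: addL.simps(2))
lemma addL_Cons_Cons[simp]: "addL (a # p) (b # q) = (a + b) # addL p q" by (simp add: addL.simps(2))

fun mulL :: "real list \<Rightarrow> real list \<Rightarrow> real list" where
  "mulL [] q = []"
| "mulL (a # p) q = addL (map ((*) a) q) (0 # mulL p q)"

definition nn :: "real list \<Rightarrow> bool" where "nn p \<longleftrightarrow> (\<forall>a\<in>set p. a \<ge> 0)"

lemma nn_addL: "nn p \<Longrightarrow> nn q \<Longrightarrow> nn (addL p q)"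
proof (induction p arbitrary: q)
  case Nil thus ?case by simp
next
  case (Cons a p)
  show ?case
  proof (cases q)
    case Nil thus ?thesis using Cons by simp
  next
    case (Cons b q')
    have "a \<ge> 0" "b \<ge> 0" "nn p" "nn q'" using Cons \<open>nn (a # p)\<close> \<open>nn q\<close> by (auto simp: nn_def)
    thus ?thesis using Cons \<open>\<And>q. nn p \<Longrightarrow> nn q \<Longrightarrow> nn (addL p q)\<close> by (simp add: nn_def)
  qed
qed

lemma nn_map: "a \<ge> 0 \<Longrightarrow> nn q \<Longrightarrow> nn (map ((*) a) q)"
  by (auto simp: nn_def)

lemma nn_mulL: "nn p \<Longrightarrow> nn q \<Longrightarrow> nn (mulL p q)"
proof (induction p)
  case Nil thus ?case by (simp add: nn_def)
next
  case (Cons a p)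
  have a: "a \<ge> 0" and p: "nn p" using Cons.prems(1) by (auto simp: nn_def)
  have "nn (0 # mulL p q)" using Cons.IH[OF p Cons.prems(2)] by (simp add: nn_def)
  thus ?case by (simp add: nn_addL nn_map[OF a Cons.prems(2)])
qed

lemma cinner_sum_left: "cinner (sum f A) (y::'a::complex_hilbert) = (\<Sum>a\<in>A. cinner (f a) y)"
  by (induction A rule: infinite_finite_induct) (simp_all add: cinner_add_left)

lemma lin_sum: "lin T \<Longrightarrow> T (sum f A) = sum (\<lambda>a. T (f a)) A"
  by (induction A rule: infinite_finite_induct) (auto simp: lin_zero lin_add)

locale sqc =
  fixes C :: "'a::complex_hilbert \<Rightarrow> 'a"
  assumes linC: "lin C" and symC: "hsym C" and posC: "hpos C" and normC: "\<And>x. norm (C x) \<le> norm x"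
begin

lemma lin_opL: "lin (opL C p)"
proof (induction p)
  case Nil thus ?case by (simp add: lin_def)
next
  case (Cons a p)
  show ?case unfolding lin_def
    by (simp add: lin_add[OF Cons] lin_scaleC[OF Cons] lin_add[OF linC] lin_scaleC[OF linC]
        scaleR_scaleC scaleC_add_right scaleC_scaleC mult.commute)
qed

lemma opL_addL: "opL C (addL p q) x = opL C p x + opL C q x"
proof (induction p arbitrary: q)
  case Nil thus ?case by simp
next
  case (Cons a p)
  thus ?case by (cases q) (simp_all add: lin_add[OF linC] algebra_simps)
qed

lemma opL_map: "opL C (map ((*) a) q) x = scaleR a (opL C q x)"
  by (induction q) (simp_all add: lin_add[OF linC] lin_scaleR[OF linC] lin_zero[OF linC] algebra_simps)

lemma opL_mulL: "opL C (mulL p q) x = opL C p (opL C q x)"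
  by (induction p) (simp_all add: opL_addL opL_map)

lemma opL_commute:
  assumes "lin T" "\<And>y. T (C y) = C (T y)"
  shows "T (opL C p x) = opL C p (T x)"
  by (induction p) (simp_all add: lin_add[OF assms(1)] lin_scaleR[OF assms(1)] lin_zero[OF assms(1)] assms(2))

lemma opL_C: "C (opL C p x) = opL C p (C x)"
  by (rule opL_commute[OF linC]) simp

lemma opL_opL: "opL C p (opL C q x) = opL C q (opL C p x)"
  by (rule opL_commute[OF lin_opL]) (simp add: opL_C)

lemma hsym_opL: "hsym (opL C p)"
proof (induction p)
  case Nil thus ?case by (simp add: hsym_def)
next
  case (Cons a p)
  show ?case unfolding hsym_def
  proof (intro allI)
    fix x y
    have "cinner (C (opL C p x)) y = cinner (opL C p x) (C y)" using symC unfolding hsym_def by blast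
    also have "\<dots> = cinner x (opL C p (C y))" using Cons unfolding hsym_def by blast
    also have "\<dots> = cinner x (C (opL C p y))" by (simp add: opL_C)
    finally show "cinner (opL C (a # p) x) y = cinner x (opL C (a # p) y)"
      by (simp add: cinner_add_left cinner_add_right cinner_scaleR_left cinner_scaleR_right)
  qed
qed

lemma lin_funpow: "lin (C ^^ k)"
  by (induction k) (simp_all add: lin_def lin_add[OF linC] lin_scaleC[OF linC])

lemma hsym_funpow: "hsym (C ^^ k)"
proof (induction k)
  case 0 thus ?case by (simp add: hsym_def)
next
  case (Suc k)
  show ?case unfolding hsym_def
  proof (intro allI)
    fix x y
    have "cinner (C ((C ^^ k) x)) y = cinner ((C ^^ k) x) (C y)" using symC unfolding hsym_def by blast
    also have "\<dots> = cinner x ((C ^^ k) (C y))" using Suc unfolding hsym_def by blast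
    also have "(C ^^ k) (C y) = C ((C ^^ k) y)" by (rule funpow_swap1[symmetric])
    finally show "cinner ((C ^^ Suc k) x) y = cinner x ((C ^^ Suc k) y)" by simp
  qed
qed

lemma hpos_funpow: "0 \<le> Re (cinner ((C ^^ k) x) x)"
proof -
  have "\<exists>j. k = 2 * j \<or> k = 2 * j + 1" by presburger
  then obtain j where "k = 2 * j \<or> k = 2 * j + 1" by blast
  thus ?thesis
  proof
    assume k: "k = 2 * j"
    have "(C ^^ k) x = (C ^^ j) ((C ^^ j) x)" unfolding k by (simp add: funpow_add mult_2)
    hence "cinner ((C ^^ k) x) x = cinner ((C ^^ j) x) ((C ^^ j) x)"
      using hsym_funpow[of j] unfolding hsym_def by simp
    thus ?thesis by (simp add: Re_cinner_self)
  next
    assume k: "k = 2 * j + 1"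
    have "(C ^^ k) x = (C ^^ j) (C ((C ^^ j) x))" unfolding k
      by (simp add: funpow_add mult_2 funpow_swap1)
    hence "cinner ((C ^^ k) x) x = cinner (C ((C ^^ j) x)) ((C ^^ j) x)"
      using hsym_funpow[of j] unfolding hsym_def by simp
    thus ?thesis using posC unfolding hpos_def by simp
  qed
qed

lemma opL_sum: "opL C p x = (\<Sum>k<length p. scaleR (p ! k) ((C ^^ k) x))"
proof (induction p)
  case Nil thus ?case by simp
next
  case (Cons a p)
  have "opL C (a # p) x = scaleR a x + C (\<Sum>k<length p. scaleR (p ! k) ((C ^^ k) x))" by (simp add: Cons)
  also have "C (\<Sum>k<length p. scaleR (p ! k) ((C ^^ k) x)) = (\<Sum>k<length p. scaleR (p ! k) ((C ^^ Suc k) x))"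
    by (simp add: lin_sum[OF linC] lin_scaleR[OF linC])
  finally have "opL C (a # p) x = a *\<^sub>R x + (\<Sum>k<length p. p ! k *\<^sub>R (C ^^ Suc k) x)" .
  moreover have "(\<Sum>k<length (a # p). (a # p) ! k *\<^sub>R (C ^^ k) x)
     = a *\<^sub>R x + (\<Sum>k<length p. p ! k *\<^sub>R (C ^^ Suc k) x)"
  proof -
    have l: "length (a # p) = Suc (length p)" by simp
    show ?thesis unfolding l sum.lessThan_Suc_shift by simp
  qed
  ultimately show ?case by simp
qed

lemma hpos_opL: "nn p \<Longrightarrow> 0 \<le> Re (cinner (opL C p x) x)"
proof -
  assume "nn p"
  have "Re (cinner (opL C p x) x) = (\<Sum>k<length p. (p ! k) * Re (cinner ((C ^^ k) x) x))"
    unfolding opL_sum by (simp add: cinner_sum_left cinner_scaleR_left)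
  also have "\<dots> \<ge> 0" using \<open>nn p\<close> hpos_funpow unfolding nn_def by (auto intro!: sum_nonneg)
  finally show ?thesis by simp
qed


fun yl :: "nat \<Rightarrow> real list" where
  "yl 0 = []"
| "yl (Suc n) = map ((*) (1/2)) (addL [0, 1] (mulL (yl n) (yl n)))"

fun dl :: "nat \<Rightarrow> real list" where
  "dl 0 = [0, 1/2]"
| "dl (Suc n) = map ((*) (1/2)) (mulL (dl n) (addL (yl (Suc n)) (yl n)))"

definition Yn :: "nat \<Rightarrow> 'a \<Rightarrow> 'a" where "Yn n = opL C (yl n)"

lemma nn_yl: "nn (yl n)"
proof (induction n)
  case 0 thus ?case by (simp add: nn_def)
next
  case (Suc n)
  have "nn [0, 1]" by (simp add: nn_def)
  thus ?case using Suc by (simp add: nn_map nn_addL nn_mulL)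
qed

lemma Yn_0: "Yn 0 x = 0" by (simp add: Yn_def)

lemma Yn_Suc: "Yn (Suc n) x = scaleR (1/2) (C x + Yn n (Yn n x))"
  by (simp add: Yn_def opL_map opL_addL opL_mulL lin_zero[OF linC])

lemma dl_eq: "opL C (dl n) x = Yn (Suc n) x - Yn n x"
proof (induction n arbitrary: x)
  case 0 thus ?case by (simp add: Yn_def opL_map opL_addL opL_mulL lin_zero[OF linC] lin_scaleR[OF linC])
next
  case (Suc n)
  have "opL C (dl (Suc n)) x = scaleR (1/2) (opL C (dl n) (Yn (Suc n) x + Yn n x))"
    by (simp only: dl.simps opL_map opL_mulL opL_addL Yn_def)
  also have "\<dots> = scaleR (1/2) ((Yn (Suc n) (Yn (Suc n) x + Yn n x)) - Yn n (Yn (Suc n) x + Yn n x))"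
    by (simp only: Suc)
  also have "\<dots> = scaleR (1/2) (Yn (Suc n) (Yn (Suc n) x) - Yn n (Yn n x))"
    using lin_add[OF lin_opL] opL_opL[of "yl n" "yl (Suc n)"] unfolding Yn_def by simp
  also have "\<dots> = Yn (Suc (Suc n)) x - Yn (Suc n) x"
    by (simp only: Yn_Suc[of "Suc n"] Yn_Suc[of n]) (simp add: algebra_simps)
  finally show ?case .
qed

lemma nn_dl: "nn (dl n)"
  by (induction n) (simp_all add: nn_def[of "[_,_]"] nn_map nn_addL nn_mulL nn_yl)

lemma lin_Yn: "lin (Yn n)" unfolding Yn_def by (rule lin_opL)
lemma hsym_Yn: "hsym (Yn n)" unfolding Yn_def by (rule hsym_opL)

lemma norm_Yn: "norm (Yn n x) \<le> norm x"
proof (induction n arbitrary: x)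
  case 0 thus ?case by (simp add: Yn_0)
next
  case (Suc n)
  have "norm (Yn (Suc n) x) \<le> (1/2) * (norm (C x) + norm (Yn n (Yn n x)))"
    by (simp add: Yn_Suc norm_triangle_ineq)
  also have "\<dots> \<le> (1/2) * (norm x + norm x)"
    using normC[of x] Suc[of "Yn n x"] Suc[of x] by simp
  finally show ?case by simp
qed

lemma Yn_mono: "Re (cinner (Yn n x) x) \<le> Re (cinner (Yn (Suc n) x) x)"
proof -
  have "0 \<le> Re (cinner (opL C (dl n) x) x)" by (rule hpos_opL[OF nn_dl])
  thus ?thesis by (simp add: dl_eq cinner_diff_left)
qed

lemma Yn_mono': "n \<le> m \<Longrightarrow> Re (cinner (Yn n x) x) \<le> Re (cinner (Yn m x) x)"
  using Yn_mono by (rule lift_Suc_mono_le[where f="\<lambda>n. Re (cinner (Yn n x) x)"])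

lemma Yn_bounded: "Re (cinner (Yn n x) x) \<le> (norm x)^2"
proof -
  have "Re (cinner (Yn n x) x) \<le> cmod (cinner (Yn n x) x)" by (rule complex_Re_le_cmod)
  also have "\<dots> \<le> norm (Yn n x) * norm x" by (rule cinner_CS)
  also have "\<dots> \<le> norm x * norm x" by (rule mult_right_mono[OF norm_Yn]) simp
  finally show ?thesis by (simp add: power2_eq_square)
qed

lemma Yn_diff_bound:
  assumes "n \<le> m"
  shows "(norm (Yn m x - Yn n x))^2 \<le> 2 * (Re (cinner (Yn m x) x) - Re (cinner (Yn n x) x))"
proof -
  define P where "P = (\<lambda>y. Yn m y - Yn n y)"
  have L: "lin P" unfolding P_def lin_def
    by (simp add: lin_add[OF lin_Yn] lin_scaleC[OF lin_Yn] scaleC_diff_right)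
  have S: "hsym P" unfolding P_def hsym_def
    using hsym_Yn[of m] hsym_Yn[of n] by (simp add: hsym_def cinner_diff_left cinner_diff_right)
  have Pos: "hpos P" unfolding P_def hpos_def
    using Yn_mono'[OF assms] by (simp add: cinner_diff_left)
  have M: "norm (P y) \<le> 2 * norm y" for y
    unfolding P_def using norm_Yn[of m y] norm_Yn[of n y] norm_triangle_ineq4[of "Yn m y" "Yn n y"] by simp
  have "(norm (P x))^2 \<le> 2 * Re (cinner (P x) x)" by (rule pos_norm_bound[OF L S Pos M])
  thus ?thesis unfolding P_def by (simp add: cinner_diff_left)
qed


lemma Yn_Cauchy: "Cauchy (\<lambda>n. Yn n x)"
proof -
  define a where "a n = Re (cinner (Yn n x) x)" for n
  have inc: "incseq a" unfolding a_def incseq_def using Yn_mono' by blast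
  obtain L where "a \<longlonglongrightarrow> L" using incseq_convergent[OF inc, of "(norm x)^2"] Yn_bounded
    unfolding a_def by blast
  hence ca: "Cauchy a" by (rule LIMSEQ_imp_Cauchy)
  have key: "dist (Yn m x) (Yn n x) < e" if "e > 0" "\<forall>m\<ge>M. \<forall>n\<ge>M. dist (a m) (a n) < e^2/2"
      "m \<ge> M" "n \<ge> M" "n \<le> m" for e M m n
  proof -
    have "(norm (Yn m x - Yn n x))^2 \<le> 2 * (a m - a n)" unfolding a_def by (rule Yn_diff_bound[OF that(5)])
    also have "\<bar>a m - a n\<bar> < e^2/2" using that(2-4) by (auto simp: dist_real_def)
    hence "a m - a n < e^2/2" by linarith
    hence "2 * (a m - a n) < e^2" by simp
    finally have "(norm (Yn m x - Yn n x))^2 < e^2" .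
    hence "norm (Yn m x - Yn n x) < e" using that(1) by (simp add: power2_less_imp_less)
    thus ?thesis by (simp add: dist_norm)
  qed
  show ?thesis unfolding Cauchy_def
  proof (intro allI impI)
    fix e :: real assume e: "e > 0"
    then obtain M where M: "\<forall>m\<ge>M. \<forall>n\<ge>M. dist (a m) (a n) < e^2/2"
      using ca unfolding Cauchy_def by (meson half_gt_zero zero_less_power)
    show "\<exists>M. \<forall>m\<ge>M. \<forall>n\<ge>M. dist (Yn m x) (Yn n x) < e"
    proof (intro exI allI impI)
      fix m n assume "m \<ge> M" "n \<ge> M"
      show "dist (Yn m x) (Yn n x) < e"
      proof (cases "n \<le> m")
        case True thus ?thesis using key[OF e M \<open>m \<ge> M\<close> \<open>n \<ge> M\<close>] by blast
      next
        case False thus ?thesis using key[OF e M \<open>n \<ge> M\<close> \<open>m \<ge> M\<close>] by (simp add: dist_commute)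
      qed
    qed
  qed
qed

definition Y :: "'a \<Rightarrow> 'a" where "Y x = lim (\<lambda>n. Yn n x)"

lemma Yn_tendsto: "(\<lambda>n. Yn n x) \<longlonglongrightarrow> Y x"
  unfolding Y_def using Yn_Cauchy Cauchy_convergent_iff convergent_LIMSEQ_iff by blast

lemma lin_scaleC_op: "lin (scaleC c :: 'a \<Rightarrow> 'a)"
  unfolding lin_def by (simp add: scaleC_add_right scaleC_scaleC mult.commute)

lemma bnd_scaleC_op: "bnd (scaleC c :: 'a \<Rightarrow> 'a)"
  unfolding bnd_def by (rule exI[of _ "cmod c"]) (simp add: norm_scaleC mult.commute)

lemma lin_Y: "lin Y"
  unfolding lin_def
proof (intro conjI allI)
  fix x y c
  have "(\<lambda>n. Yn n (x + y)) \<longlonglongrightarrow> Y x + Y y"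
    using tendsto_add[OF Yn_tendsto[of x] Yn_tendsto[of y]] by (simp add: lin_add[OF lin_Yn])
  thus "Y (x + y) = Y x + Y y" using Yn_tendsto[of "x+y"] LIMSEQ_unique by blast
  have "(\<lambda>n. Yn n (scaleC c x)) \<longlonglongrightarrow> scaleC c (Y x)"
    using lin_bnd_tendsto[OF lin_scaleC_op bnd_scaleC_op Yn_tendsto[of x], of c]
    by (simp add: lin_scaleC[OF lin_Yn])
  thus "Y (scaleC c x) = scaleC c (Y x)" using Yn_tendsto[of "scaleC c x"] LIMSEQ_unique by blast
qed

lemma norm_Y: "norm (Y x) \<le> norm x"
  by (rule LIMSEQ_le_const2[OF tendsto_norm[OF Yn_tendsto[of x]]]) (use norm_Yn in blast)

lemma bnd_Y: "bnd Y" unfolding bnd_def by (rule exI[of _ 1]) (simp add: norm_Y)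

lemma hsym_Y: "hsym Y"
  unfolding hsym_def
proof (intro allI)
  fix x y
  have "(\<lambda>n. cinner (Yn n x) y) \<longlonglongrightarrow> cinner (Y x) y"
    by (rule tendsto_cinner[OF Yn_tendsto tendsto_const])
  moreover have "(\<lambda>n. cinner (Yn n x) y) \<longlonglongrightarrow> cinner x (Y y)"
    using tendsto_cinner[OF tendsto_const Yn_tendsto[of y], of x] hsym_Yn unfolding hsym_def by simp
  ultimately show "cinner (Y x) y = cinner x (Y y)" by (rule LIMSEQ_unique)
qed

lemma Y_fix: "Y x = scaleR (1/2) (C x + Y (Y x))"
proof -
  have t1: "(\<lambda>n. Yn n (Yn n x) - Y (Y x)) \<longlonglongrightarrow> 0"
  proof -
    have a: "(\<lambda>n. Yn n (Yn n x - Y x)) \<longlonglongrightarrow> 0"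
    proof (rule Lim_null_comparison)
      show "\<forall>\<^sub>F n in sequentially. norm (Yn n (Yn n x - Y x)) \<le> norm (Yn n x - Y x)"
        using norm_Yn by simp
      show "(\<lambda>n. norm (Yn n x - Y x)) \<longlonglongrightarrow> 0"
        using Yn_tendsto[of x] by (simp add: LIM_zero_iff tendsto_norm_zero)
    qed
    have b: "(\<lambda>n. Yn n (Y x) - Y (Y x)) \<longlonglongrightarrow> 0"
      using Yn_tendsto[of "Y x"] by (simp add: LIM_zero_iff)
    have "(\<lambda>n. Yn n (Yn n x - Y x) + (Yn n (Y x) - Y (Y x))) \<longlonglongrightarrow> 0"
      using tendsto_add[OF a b] by simp
    thus ?thesis by (simp add: lin_diff[OF lin_Yn])
  qed
  hence "(\<lambda>n. Yn n (Yn n x)) \<longlonglongrightarrow> Y (Y x)" by (simp add: LIM_zero_iff)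
  hence "(\<lambda>n. Yn (Suc n) x) \<longlonglongrightarrow> scaleR (1/2) (C x + Y (Y x))"
    unfolding Yn_Suc by (intro tendsto_intros)
  moreover have "(\<lambda>n. Yn (Suc n) x) \<longlonglongrightarrow> Y x" using Yn_tendsto by (rule LIMSEQ_Suc)
  ultimately show ?thesis using LIMSEQ_unique by blast
qed

lemma Y_commute:
  assumes "lin T" "bnd T" "\<And>y. T (C y) = C (T y)"
  shows "T (Y x) = Y (T x)"
proof -
  have "(\<lambda>n. T (Yn n x)) \<longlonglongrightarrow> T (Y x)" by (rule lin_bnd_tendsto[OF assms(1,2) Yn_tendsto])
  moreover have "T (Yn n x) = Yn n (T x)" for n unfolding Yn_def by (rule opL_commute[OF assms(1,3)])
  ultimately have "(\<lambda>n. Yn n (T x)) \<longlonglongrightarrow> T (Y x)" by simp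
  thus ?thesis using Yn_tendsto LIMSEQ_unique by blast
qed

end



lemma bcl_iff: "bounded_clinear_op S \<longleftrightarrow> lin S \<and> bnd S"
  unfolding bounded_clinear_op_def linear_op_def csubspace_def lin_def bnd_def by auto

lemma bnd_le: "bnd S \<Longrightarrow> \<exists>M. \<forall>y. norm (S y) \<le> M * norm y"
  unfolding bnd_def by (metis mult.commute)

lemma sqrt_exists_unique:
  assumes LG: "lin G" and BG: "bnd G" and SG: "hsym G" and PG: "hpos G"
  shows "\<exists>!S. bounded_clinear_op S \<and> (\<forall>x y. cinner (S x) y = cinner x (S y))
      \<and> (\<forall>x. 0 \<le> Re (cinner (S x) x)) \<and> (\<forall>x. S (S x) = G x)"
proof -
  obtain K where K: "\<And>x. norm (G x) \<le> norm x * K" using BG unfolding bnd_def by blast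
  define k where "k = max K 0 + 1"
  have k0: "k > 0" unfolding k_def by simp
  define G' where "G' x = scaleR (1/k) (G x)" for x
  have LG': "lin G'" unfolding lin_def G'_def
    by (simp add: lin_add[OF LG] lin_scaleC[OF LG] scaleR_scaleC scaleC_add_right scaleC_scaleC mult.commute)
  have SG': "hsym G'" using SG unfolding hsym_def G'_def by (simp add: cinner_scaleR_left cinner_scaleR_right)
  have PG': "hpos G'" using PG k0 unfolding hpos_def G'_def by (simp add: cinner_scaleR_left)
  have nG': "norm (G' x) \<le> 1 * norm x" for x
  proof -
    have "norm (G' x) = norm (G x) / k" unfolding G'_def using k0 by simp
    also have "\<dots> \<le> norm x * K / k" using K[of x] k0 by (simp add: divide_right_mono)
    also have "\<dots> \<le> norm x * k / k" using k0 unfolding k_def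
      by (intro divide_right_mono mult_left_mono) auto
    finally show ?thesis using k0 by simp
  qed
  define C where "C x = x - G' x" for x
  have LC: "lin C" unfolding lin_def C_def
    by (simp add: lin_add[OF LG'] lin_scaleC[OF LG'] scaleC_diff_right)
  have SC: "hsym C" using SG' unfolding hsym_def C_def by (simp add: cinner_diff_left cinner_diff_right)
  have reG': "Re (cinner (G' x) x) \<le> (norm x)^2" for x
  proof -
    have "Re (cinner (G' x) x) \<le> cmod (cinner (G' x) x)" by (rule complex_Re_le_cmod)
    also have "\<dots> \<le> norm (G' x) * norm x" by (rule cinner_CS)
    also have "\<dots> \<le> norm x * norm x" using nG'[of x] by (simp add: mult_right_mono)
    finally show ?thesis by (simp add: power2_eq_square)
  qed
  have PC: "hpos C" unfolding hpos_def C_def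
    using reG' by (simp add: cinner_diff_left Re_cinner_self)
  have NC: "norm (C x) \<le> norm x" for x
  proof -
    have sx: "Re (cinner x (G' x)) = Re (cinner (G' x) x)" using SG' unfolding hsym_def by metis
    have "(norm (C x))^2 = Re (cinner (C x) (C x))" by (simp add: Re_cinner_self)
    also have "\<dots> = (norm x)^2 - 2 * Re (cinner (G' x) x) + (norm (G' x))^2"
      unfolding C_def by (simp add: cinner_diff_left cinner_diff_right Re_cinner_self sx)
    also have "(norm (G' x))^2 \<le> 1 * Re (cinner (G' x) x)" by (rule pos_norm_bound[OF LG' SG' PG' nG'])
    finally have "(norm (C x))^2 \<le> (norm x)^2 - Re (cinner (G' x) x)" by simp
    also have "\<dots> \<le> (norm x)^2" using PG' unfolding hpos_def by auto
    finally show ?thesis by (rule power2_le_imp_le) simp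
  qed
  interpret sqc C using LC SC PC NC by unfold_locales auto
  define S0 where "S0 x = x - Y x" for x
  define S where "S x = scaleR (sqrt k) (S0 x)" for x
  have LS0: "lin S0" unfolding lin_def S0_def
    by (simp add: lin_add[OF lin_Y] lin_scaleC[OF lin_Y] scaleC_diff_right)
  have LS: "lin S" unfolding lin_def S_def
    by (simp add: lin_add[OF LS0] lin_scaleC[OF LS0] scaleR_scaleC scaleC_add_right scaleC_scaleC mult.commute)
  have BS: "bnd S" unfolding bnd_def
  proof (rule exI[of _ "2 * sqrt k"], intro allI)
    fix x
    have "norm (S x) = sqrt k * norm (x - Y x)" unfolding S_def S0_def using k0 by simp
    also have "\<dots> \<le> sqrt k * (norm x + norm x)"
      using norm_triangle_ineq4[of x "Y x"] norm_Y[of x] k0 by (intro mult_left_mono) auto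
    finally show "norm (S x) \<le> norm x * (2 * sqrt k)" by (simp add: ac_simps)
  qed
  have SS: "hsym S" using hsym_Y unfolding hsym_def S_def S0_def
    by (simp add: cinner_scaleR_left cinner_scaleR_right cinner_diff_left cinner_diff_right)
  have PS: "hpos S" unfolding hpos_def
  proof
    fix x
    have "Re (cinner (Y x) x) \<le> cmod (cinner (Y x) x)" by (rule complex_Re_le_cmod)
    also have "\<dots> \<le> norm (Y x) * norm x" by (rule cinner_CS)
    also have "\<dots> \<le> norm x * norm x" using norm_Y[of x] by (simp add: mult_right_mono)
    finally have "0 \<le> Re (cinner (S0 x) x)" unfolding S0_def
      by (simp add: cinner_diff_left Re_cinner_self power2_eq_square)
    thus "0 \<le> Re (cinner (S x) x)" unfolding S_def using k0 by (simp add: cinner_scaleR_left)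
  qed
  have S0S0: "S0 (S0 x) = G' x" for x
  proof -
    have "S0 (S0 x) = x - Y x - (Y x - Y (Y x))" unfolding S0_def by (simp add: lin_diff[OF lin_Y])
    also have "\<dots> = x - 2 *\<^sub>R Y x + Y (Y x)" by (simp add: algebra_simps scaleR_2)
    also have "2 *\<^sub>R Y x = C x + Y (Y x)"
    proof -
      have "2 *\<^sub>R Y x = 2 *\<^sub>R ((1/2) *\<^sub>R (C x + Y (Y x)))" using Y_fix[of x] by simp
      thus ?thesis by simp
    qed
    also have "x - (C x + Y (Y x)) + Y (Y x) = G' x" by (simp add: C_def)
    finally show ?thesis .
  qed
  have SSG: "S (S x) = G x" for x
    using k0 unfolding S_def by (simp add: lin_scaleR[OF LS0] S0S0 G'_def)
  have uniq: "T = S" if LT: "lin T" and BT: "bnd T" and ST: "hsym T" and PT: "hpos T" and TT: "\<And>x. T (T x) = G x" for T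
  proof
    fix x
    have TG: "T (G y) = G (T y)" for y by (metis TT)
    have TC: "T (C y) = C (T y)" for y
      unfolding C_def G'_def by (simp add: lin_diff[OF LT] lin_scaleR[OF LT] TG)
    have TS: "T (S y) = S (T y)" for y
      unfolding S_def S0_def by (simp add: lin_scaleR[OF LT] lin_diff[OF LT] Y_commute[OF LT BT TC])
    define d where "d = S x - T x"
    have "S d + T d = 0"
      unfolding d_def by (simp add: lin_diff[OF LS] lin_diff[OF LT] TS SSG TT)
    hence "Re (cinner (S d) d) + Re (cinner (T d) d) = 0"
      by (metis cinner_add_left cinner_zero_left plus_complex.sel(1) zero_complex.sel(1))
    moreover have "0 \<le> Re (cinner (S d) d)" "0 \<le> Re (cinner (T d) d)"
      using PS PT unfolding hpos_def by auto
    ultimately have z: "Re (cinner (S d) d) = 0" "Re (cinner (T d) d) = 0" by linarith+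
    obtain MS where MS: "\<And>y. norm (S y) \<le> MS * norm y" using bnd_le[OF BS] by blast
    obtain MT where MT: "\<And>y. norm (T y) \<le> MT * norm y" using bnd_le[OF BT] by blast
    have "(norm (S d))^2 \<le> MS * Re (cinner (S d) d)" by (rule pos_norm_bound[OF LS SS PS MS])
    hence Sd: "S d = 0" using z by simp
    have "(norm (T d))^2 \<le> MT * Re (cinner (T d) d)" by (rule pos_norm_bound[OF LT ST PT MT])
    hence Td: "T d = 0" using z by simp
    have "cinner d d = cinner (S x) d - cinner (T x) d" unfolding d_def by (simp add: cinner_diff_left)
    also have "\<dots> = cinner x (S d) - cinner x (T d)"
      using SS ST unfolding hsym_def by simp
    also have "\<dots> = 0" by (simp add: Sd Td)
    finally have "d = 0" by simp
    thus "T x = S x" unfolding d_def by simp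
  qed
  show ?thesis
  proof (rule ex1I[of _ S])
    show "bounded_clinear_op S \<and> (\<forall>x y. cinner (S x) y = cinner x (S y))
      \<and> (\<forall>x. 0 \<le> Re (cinner (S x) x)) \<and> (\<forall>x. S (S x) = G x)"
      using LS BS SS PS SSG unfolding bcl_iff hsym_def hpos_def by blast
  next
    fix T assume "bounded_clinear_op T \<and> (\<forall>x y. cinner (T x) y = cinner x (T y))
      \<and> (\<forall>x. 0 \<le> Re (cinner (T x) x)) \<and> (\<forall>x. T (T x) = G x)"
    thus "T = S" using uniq unfolding bcl_iff hsym_def hpos_def by blast
  qed
qed

lemma op_sqrt_props:
  assumes "lin G" "bnd G" "hsym G" "hpos G"
  shows "lin (op_sqrt G)" "bnd (op_sqrt G)" "hsym (op_sqrt G)" "hpos (op_sqrt G)"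
    "\<And>x. op_sqrt G (op_sqrt G x) = G x"
proof -
  have "bounded_clinear_op (op_sqrt G) \<and> (\<forall>x y. cinner (op_sqrt G x) y = cinner x (op_sqrt G y))
      \<and> (\<forall>x. 0 \<le> Re (cinner (op_sqrt G x) x)) \<and> (\<forall>x. op_sqrt G (op_sqrt G x) = G x)"
    unfolding op_sqrt_def by (rule theI'[OF sqrt_exists_unique[OF assms]])
  thus "lin (op_sqrt G)" "bnd (op_sqrt G)" "hsym (op_sqrt G)" "hpos (op_sqrt G)"
    "\<And>x. op_sqrt G (op_sqrt G x) = G x" unfolding bcl_iff hsym_def hpos_def by blast+
qed




lemma csubspace_diff: "csubspace M \<Longrightarrow> x \<in> M \<Longrightarrow> y \<in> M \<Longrightarrow> x - y \<in> M"
  unfolding csubspace_def by (metis diff_conv_add_uminus scaleC_minus_one)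

lemma csubspace_scaleR: "csubspace M \<Longrightarrow> x \<in> M \<Longrightarrow> scaleR r x \<in> M"
  unfolding csubspace_def by (simp add: scaleR_scaleC)

lemma parallelogram: "(norm (a - b))^2 + (norm (a + b))^2 = 2 * (norm (a::'a::complex_hilbert))^2 + 2 * (norm b)^2"
proof -
  have "complex_of_real ((norm (a - b))^2 + (norm (a + b))^2) = cinner (a - b) (a - b) + cinner (a + b) (a + b)"
    by (simp add: cinner_self)
  also have "\<dots> = 2 * cinner a a + 2 * cinner b b"
    by (simp add: cinner_diff_left cinner_diff_right cinner_add_left cinner_add_right)
  also have "\<dots> = complex_of_real (2 * (norm a)^2 + 2 * (norm b)^2)" by (simp add: cinner_self)
  finally show ?thesis by (simp only: of_real_eq_iff)
qed

lemma proj_orth: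
  fixes x :: "'a::complex_hilbert"
  assumes M: "csubspace M" "closed M"
  shows "\<exists>m\<in>M. \<forall>y\<in>M. cinner y (x - m) = 0"
proof -
  define f where "f m = norm (x - m)" for m
  define d where "d = Inf (f ` M)"
  have ne: "f ` M \<noteq> {}" using M(1) unfolding csubspace_def by auto
  have bb: "bdd_below (f ` M)" unfolding f_def by (rule bdd_belowI[of _ 0]) auto
  have low: "d \<le> f y" if "y \<in> M" for y unfolding d_def using bb that by (simp add: cInf_lower)
  have d0: "d \<ge> 0" unfolding d_def by (rule cInf_greatest[OF ne]) (auto simp: f_def)
  have ex: "\<exists>m\<in>M. f m < d + 1 / real (Suc n)" for n
  proof -
    have "Inf (f ` M) < d + 1 / real (Suc n)" unfolding d_def by simp
    then obtain v where "v \<in> f ` M" "v < d + 1 / real (Suc n)" using cInf_lessD[OF ne] by blast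
    thus ?thesis by blast
  qed
  have "\<forall>n. \<exists>m. m \<in> M \<and> f m < d + 1 / real (Suc n)" using ex by blast
  hence "\<exists>ms. \<forall>n. ms n \<in> M \<and> f (ms n) < d + 1 / real (Suc n)" by (rule choice)
  then obtain ms where ms: "\<And>n. ms n \<in> M" "\<And>n. f (ms n) < d + 1 / real (Suc n)" by blast
  have mid: "scaleR (1/2) (ms i + ms j) \<in> M" for i j
    using M(1) ms(1) unfolding csubspace_def by (simp add: csubspace_scaleR[OF M(1)])
  have cbound: "(norm (ms i - ms j))^2 \<le> 8 * d * e + 4 * e^2"
    if "1 / real (Suc i) \<le> e" "1 / real (Suc j) \<le> e" for i j e
  proof -
    have p: "(norm ((x - ms i) - (x - ms j)))^2 + (norm ((x - ms i) + (x - ms j)))^2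
        = 2 * (f (ms i))^2 + 2 * (f (ms j))^2" unfolding f_def by (rule parallelogram)
    have "(x - ms i) + (x - ms j) = 2 *\<^sub>R (x - scaleR (1/2) (ms i + ms j))"
      by (simp add: algebra_simps scaleR_2)
    hence "norm ((x - ms i) + (x - ms j)) = 2 * f (scaleR (1/2) (ms i + ms j))" unfolding f_def by simp
    hence q: "norm ((x - ms i) + (x - ms j)) \<ge> 2 * d" using low[OF mid[of i j]] by simp
    have "(x - ms i) - (x - ms j) = ms j - ms i" by simp
    hence "(norm (ms i - ms j))^2 = 2 * (f (ms i))^2 + 2 * (f (ms j))^2 - (norm ((x - ms i) + (x - ms j)))^2"
      using p by (simp add: norm_minus_commute)
    also have "(norm ((x - ms i) + (x - ms j)))^2 \<ge> (2 * d)^2" using q d0 by (intro power_mono) auto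
    moreover have "f (ms i) \<le> d + e" "f (ms j) \<le> d + e" using ms(2)[of i] ms(2)[of j] that by linarith+
    hence "(f (ms i))^2 \<le> (d + e)^2" "(f (ms j))^2 \<le> (d + e)^2"
      by (auto intro!: power_mono simp: f_def)
    ultimately have "(norm (ms i - ms j))^2 \<le> 2 * (d + e)^2 + 2 * (d + e)^2 - (2 * d)^2" by linarith
    also have "\<dots> = 8 * d * e + 4 * e^2" by (simp add: power2_eq_square algebra_simps)
    finally show ?thesis .
  qed
  have "Cauchy ms"
    unfolding Cauchy_def
  proof (intro allI impI)
    fix r :: real assume r: "r > 0"
    define e where "e = min 1 (r^2 / (8 * d + 5))"
    have e0: "e > 0" unfolding e_def using r d0 by simp
    obtain N where N: "inverse (real (Suc N)) < e" using reals_Archimedean[OF e0] by blast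
    have "8 * d * e + 4 * e^2 < r^2"
    proof -
      have "e \<le> 1" unfolding e_def by simp
      hence "e * e \<le> e" using e0 by (intro mult_left_le_one_le) auto
      hence "e^2 \<le> e" by (simp add: power2_eq_square)
      hence "8 * d * e + 4 * e^2 \<le> (8 * d + 4) * e" by (simp add: algebra_simps)
      also have "\<dots> < (8 * d + 5) * e" using e0 by (simp add: mult_strict_right_mono)
      also have "\<dots> \<le> (8 * d + 5) * (r^2 / (8 * d + 5))" unfolding e_def using d0
        by (intro mult_left_mono) auto
      also have "\<dots> = r^2" using d0 by simp
      finally show ?thesis .
    qed
    show "\<exists>N. \<forall>m\<ge>N. \<forall>n\<ge>N. dist (ms m) (ms n) < r"
    proof (intro exI allI impI)
      fix i j assume ij: "i \<ge> N" "j \<ge> N"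
      have dec: "1 / real (Suc k) \<le> e" if "k \<ge> N" for k
      proof -
        have "1 / real (Suc k) \<le> 1 / real (Suc N)" using that by (intro divide_left_mono) auto
        thus ?thesis using N by (simp add: inverse_eq_divide)
      qed
      have "1 / real (Suc i) \<le> e" "1 / real (Suc j) \<le> e" using dec ij by auto
      hence "(norm (ms i - ms j))^2 < r^2" using cbound \<open>8 * d * e + 4 * e^2 < r^2\<close> by (meson le_less_trans)
      hence "norm (ms i - ms j) < r" using r by (simp add: power2_less_imp_less)
      thus "dist (ms i) (ms j) < r" by (simp add: dist_norm)
    qed
  qed
  then obtain m0 where lim: "ms \<longlonglongrightarrow> m0" using Cauchy_convergent_iff convergent_def by blast
  have m0M: "m0 \<in> M" using closed_sequentially[OF M(2)] ms(1) lim by blast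
  have fm0: "f m0 \<le> d"
  proof -
    have t1: "(\<lambda>n. f (ms n)) \<longlonglongrightarrow> f m0" unfolding f_def by (intro tendsto_intros lim)
    have t2: "(\<lambda>n. d + 1 / real (Suc n)) \<longlonglongrightarrow> d + 0"
      by (intro tendsto_intros) (rule LIMSEQ_Suc[OF lim_const_over_n])
    show ?thesis using LIMSEQ_le[OF t1 t2] ms(2) less_imp_le by auto
  qed
  show ?thesis
  proof (intro bexI[OF _ m0M] ballI)
    fix y assume yM: "y \<in> M"
    define z where "z = x - m0"
    define c where "c = cinner y z"
    define q where "q = (cmod c)^2"
    define s where "s = 1 / ((norm y)^2 + 1)"
    have ny: "(norm y)^2 + 1 > 0" by (simp add: add_nonneg_pos)
    have s0: "s > 0" unfolding s_def using ny by simp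
    have sy: "s * (norm y)^2 < 1" unfolding s_def using ny by (simp add: field_simps)
    define t where "t = complex_of_real s * c"
    have "m0 + scaleC t y \<in> M" using M(1) m0M yM unfolding csubspace_def by blast
    hence "d \<le> norm (z - scaleC t y)" using low unfolding f_def z_def by (simp add: algebra_simps)
    hence "norm z \<le> norm (z - scaleC t y)" using fm0 unfolding f_def z_def by simp
    hence "(norm z)^2 \<le> (norm (z - scaleC t y))^2" by (simp add: power_mono)
    moreover have "complex_of_real ((norm (z - scaleC t y))^2)
        = cinner z z - t * cinner z y - cnj t * cinner y z + cnj t * t * cinner y y"
    proof -
      have "complex_of_real ((norm (z - scaleC t y))^2) = cinner (z - scaleC t y) (z - scaleC t y)"
        by (simp add: cinner_self)
      also have "\<dots> = cinner z z - t * cinner z y - cnj t * cinner y z + cnj t * t * cinner y y"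
        by (simp add: cinner_diff_left cinner_diff_right cinner_scaleC_left cinner_scaleC_right algebra_simps)
      finally show ?thesis .
    qed
    moreover have "cinner z y = cnj c" unfolding c_def by (rule cinner_commute)
    moreover have cc: "cnj c * c = of_real q" unfolding q_def using complex_norm_square[of c] by (simp add: mult.commute)
    ultimately have "complex_of_real ((norm (z - scaleC t y))^2)
        = of_real ((norm z)^2) - of_real (s * q) - of_real (s * q) + of_real (s^2 * q) * of_real ((norm y)^2)"
    proof -
      assume h: "complex_of_real ((norm (z - scaleC t y))^2)
        = cinner z z - t * cinner z y - cnj t * cinner y z + cnj t * t * cinner y y"
        "cinner z y = cnj c"
      have e1: "t * cinner z y = of_real (s * q)" unfolding h(2) t_def using cc by (simp add: ac_simps)
      have e2: "cnj t * cinner y z = of_real (s * q)" unfolding t_def c_def[symmetric] using cc by (simp add: ac_simps)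
      have e3: "cnj t * t = of_real (s^2 * q)" unfolding t_def using cc by (simp add: ac_simps power2_eq_square)
      show ?thesis unfolding h(1) e1 e2 e3 by (simp add: cinner_self)
    qed
    hence "complex_of_real ((norm (z - scaleC t y))^2)
        = of_real ((norm z)^2 - 2 * s * q + s^2 * q * (norm y)^2)" by simp
    hence eq: "(norm (z - scaleC t y))^2 = (norm z)^2 - 2 * s * q + s^2 * q * (norm y)^2"
      by (simp only: of_real_eq_iff)
    have "0 \<le> s * q * (s * (norm y)^2 - 2)" using \<open>(norm z)^2 \<le> _\<close> eq by (simp add: algebra_simps power2_eq_square)
    moreover have "s * (norm y)^2 - 2 < 0" using sy by simp
    moreover have "q \<ge> 0" unfolding q_def by simp
    ultimately have "q = 0" using s0 by (smt (verit) mult_pos_neg mult_pos_pos)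
    thus "cinner y (x - m0) = 0" unfolding q_def c_def z_def by simp
  qed
qed

lemma ortho_full:
  assumes "csubspace M" "closed M" "\<And>z. (\<forall>m\<in>M. cinner m z = 0) \<Longrightarrow> z = 0"
  shows "M = UNIV"
proof -
  have "x \<in> M" for x
  proof -
    obtain m where "m \<in> M" "\<forall>y\<in>M. cinner y (x - m) = 0" using proj_orth[OF assms(1,2)] by blast
    hence "x - m = 0" using assms(3) by blast
    thus ?thesis using \<open>m \<in> M\<close> by simp
  qed
  thus ?thesis by auto
qed




lemma dense_orth:
  fixes v :: "'a::complex_hilbert"
  assumes "densely_defined D" "\<And>\<xi>. \<xi> \<in> D \<Longrightarrow> cinner \<xi> v = 0"
  shows "v = 0"
proof -
  have cl: "closed {w. cinner w v = 0}"
    by (rule closed_Collect_eq[OF bounded_linear.continuous_on[OF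
          bounded_bilinear.bounded_linear_left[OF bounded_bilinear_cinner] continuous_on_id] continuous_on_const])
  have "D \<subseteq> {w. cinner w v = 0}" using assms(2) by blast
  hence "closure D \<subseteq> {w. cinner w v = 0}" using cl by (rule closure_minimal)
  hence "cinner v v = 0" using assms(1) unfolding densely_defined_def by blast
  thus ?thesis by simp
qed

lemma lin_scC: "lin (scaleC c :: 'a::complex_hilbert \<Rightarrow> 'a)"
  unfolding lin_def by (simp add: scaleC_add_right scaleC_scaleC mult.commute)

lemma bnd_scC: "bnd (scaleC c :: 'a::complex_hilbert \<Rightarrow> 'a)"
  unfolding bnd_def by (rule exI[of _ "cmod c"]) (simp add: norm_scaleC mult.commute)

lemma csubspace_closure:
  fixes M :: "'a::complex_hilbert set"
  assumes "csubspace M" shows "csubspace (closure M)"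
  unfolding csubspace_def
proof (intro conjI ballI allI)
  show "0 \<in> closure M" using assms closure_subset unfolding csubspace_def by blast
next
  fix x y assume "x \<in> closure M" "y \<in> closure M"
  then obtain f g where f: "\<forall>n. f n \<in> M" "f \<longlonglongrightarrow> x" and g: "\<forall>n. g n \<in> M" "g \<longlonglongrightarrow> y"
    unfolding closure_sequential by blast
  have "\<forall>n. f n + g n \<in> M" using f g assms unfolding csubspace_def by blast
  moreover have "(\<lambda>n. f n + g n) \<longlonglongrightarrow> x + y" by (intro tendsto_intros f g)
  ultimately show "x + y \<in> closure M" unfolding closure_sequential by (intro exI[where x="\<lambda>n. f n + g n"]) blast
next
  fix x c assume "x \<in> closure M"
  then obtain f where f: "\<forall>n. f n \<in> M" "f \<longlonglongrightarrow> x" unfolding closure_sequential by blast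
  have "\<forall>n. scaleC c (f n) \<in> M" using f assms unfolding csubspace_def by blast
  moreover have "(\<lambda>n. scaleC c (f n)) \<longlonglongrightarrow> scaleC c x"
    by (rule lin_bnd_tendsto[OF lin_scC bnd_scC f(2)])
  ultimately show "scaleC c x \<in> closure M" unfolding closure_sequential by (intro exI[where x="\<lambda>n. scaleC c (f n)"]) blast
qed

lemma lin_continuous: "lin T \<Longrightarrow> bnd T \<Longrightarrow> continuous_on X T"
  using lin_bnd_bounded_linear linear_continuous_on bounded_linear.linear by blast

locale mctx =
  fixes DA :: "'a::complex_hilbert set" and A :: "'a \<Rightarrow> 'a" and G :: "'a \<Rightarrow> 'a"
  assumes closedA: "closed_op DA A"
    and denseA: "densely_defined DA"
    and metricG: "bounded_metric_op G"
begin

definition S where "S = op_sqrt G"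
definition B where "B = (\<lambda>y. S (A (inv_into UNIV S y)))"

lemma LG: "lin G" and BG: "bnd G" and SG: "hsym G" and PG: "hpos G"
  and defG: "\<And>x. x \<noteq> 0 \<Longrightarrow> 0 < Re (cinner (G x) x)"
proof -
  show "lin G" "bnd G" using metricG unfolding bounded_metric_op_def bcl_iff by auto
  show "hsym G" using metricG unfolding bounded_metric_op_def hsym_def by auto
  show "\<And>x. x \<noteq> 0 \<Longrightarrow> 0 < Re (cinner (G x) x)" using metricG unfolding bounded_metric_op_def by auto
  thus "hpos G" unfolding hpos_def by (metis cinner_zero_right order_less_imp_le order_refl zero_complex.sel(1))
qed

lemma LS: "lin S" and BS: "bnd S" and SS: "hsym S" and PS: "hpos S" and SSG: "\<And>x. S (S x) = G x"
  unfolding S_def using op_sqrt_props[OF LG BG SG PG] by auto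

lemma symS: "cinner (S x) y = cinner x (S y)" using SS unfolding hsym_def by blast
lemma symG: "cinner (G x) y = cinner x (G y)" using SG unfolding hsym_def by blast

lemma injS: "inj S"
proof (rule injI)
  fix x y assume "S x = S y"
  hence "S (x - y) = 0" by (simp add: lin_diff[OF LS])
  hence "G (x - y) = 0" using SSG[of "x - y"] by (simp add: lin_zero[OF LS])
  hence "x - y = 0" using defG[of "x - y"] by fastforce
  thus "x = y" by simp
qed

lemma invS[simp]: "inv_into UNIV S (S x) = x" using injS by simp
lemma B_S[simp]: "B (S x) = S (A x)" unfolding B_def by simp

lemma Sinner: "cinner (S x) (S y) = cinner x (G y)"
  by (simp add: symS SSG)

lemma linA: "linear_op DA A" using closedA unfolding closed_op_def by blast
lemma csubDA: "csubspace DA" using linA unfolding linear_op_def by blast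
lemma A_add: "x \<in> DA \<Longrightarrow> y \<in> DA \<Longrightarrow> A (x + y) = A x + A y" using linA unfolding linear_op_def by blast
lemma A_scaleC: "x \<in> DA \<Longrightarrow> A (scaleC c x) = scaleC c (A x)" using linA unfolding linear_op_def by blast
lemma DA_add: "x \<in> DA \<Longrightarrow> y \<in> DA \<Longrightarrow> x + y \<in> DA" using csubDA unfolding csubspace_def by blast
lemma DA_scaleC: "x \<in> DA \<Longrightarrow> scaleC c x \<in> DA" using csubDA unfolding csubspace_def by blast
lemma DA_diff: "x \<in> DA \<Longrightarrow> y \<in> DA \<Longrightarrow> x - y \<in> DA" by (rule csubspace_diff[OF csubDA])
lemma A_diff: "x \<in> DA \<Longrightarrow> y \<in> DA \<Longrightarrow> A (x - y) = A x - A y"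
proof -
  assume "x \<in> DA" "y \<in> DA"
  hence "- y \<in> DA" using DA_scaleC[of y "-1"] by (simp add: scaleC_minus_one)
  moreover have "A (- y) = - A y" using A_scaleC[OF \<open>y \<in> DA\<close>, of "-1"] by (simp add: scaleC_minus_one)
  ultimately show ?thesis using A_add[OF \<open>x \<in> DA\<close>, of "-y"] by simp
qed

lemma adj_unique: "(\<eta>, z1) \<in> adj_graph DA A \<Longrightarrow> (\<eta>, z2) \<in> adj_graph DA A \<Longrightarrow> z1 = z2"
proof -
  assume h: "(\<eta>, z1) \<in> adj_graph DA A" "(\<eta>, z2) \<in> adj_graph DA A"
  have "z1 - z2 = 0"
  proof (rule dense_orth[OF denseA])
    fix \<xi> assume "\<xi> \<in> DA"
    thus "cinner \<xi> (z1 - z2) = 0" using h unfolding adj_graph_def by (simp add: cinner_diff_right)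
  qed
  thus ?thesis by simp
qed

lemma adj_eq: "(\<eta>, z) \<in> adj_graph DA A \<Longrightarrow> adj DA A \<eta> = z"
  unfolding adj_def using adj_unique by blast

lemma adj_in: "\<eta> \<in> adj_dom DA A \<Longrightarrow> (\<eta>, adj DA A \<eta>) \<in> adj_graph DA A"
  unfolding adj_dom_def using adj_eq by force

lemma adjB_iff: "(u, v) \<in> adj_graph (S ` DA) B \<longleftrightarrow> (\<forall>\<xi>\<in>DA. cinner (S (A \<xi>)) u = cinner (S \<xi>) v)"
  unfolding adj_graph_def by auto

lemma adjB_adjA: "(u, v) \<in> adj_graph (S ` DA) B \<longleftrightarrow> (S u, S v) \<in> adj_graph DA A"
  unfolding adjB_iff adj_graph_def by (simp add: symS)

lemma closure_SDA: "closure (S ` DA) = UNIV"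
proof (rule ortho_full)
  show "csubspace (closure (S ` DA))"
  proof (rule csubspace_closure)
    show "csubspace (S ` DA)" unfolding csubspace_def
    proof (intro conjI ballI allI)
      show "0 \<in> S ` DA" using csubDA lin_zero[OF LS] unfolding csubspace_def by (metis image_eqI)
    next
      fix x y assume "x \<in> S ` DA" "y \<in> S ` DA"
      then obtain a b where "a \<in> DA" "b \<in> DA" "x = S a" "y = S b" by blast
      thus "x + y \<in> S ` DA" using DA_add by (metis image_eqI lin_add[OF LS])
    next
      fix x c assume "x \<in> S ` DA"
      then obtain a where "a \<in> DA" "x = S a" by blast
      thus "scaleC c x \<in> S ` DA" using DA_scaleC by (metis image_eqI lin_scaleC[OF LS])
    qed
  qed
  show "closed (closure (S ` DA))" by simp
  fix z assume h: "\<forall>m\<in>closure (S ` DA). cinner m z = 0"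
  have "S z = 0"
  proof (rule dense_orth[OF denseA])
    fix \<xi> assume "\<xi> \<in> DA"
    hence "cinner (S \<xi>) z = 0" using h closure_subset by blast
    thus "cinner \<xi> (S z) = 0" by (simp add: symS)
  qed
  thus "z = 0" using injS lin_zero[OF LS] by (metis injD)
qed

end



context mctx begin

lemma ginner_S: "ginner G x y = cinner (S x) (S y)" unfolding ginner_def S_def ..

lemma op_graph_iff: "(u, v) \<in> op_graph D f \<longleftrightarrow> u \<in> D \<and> v = f u" unfolding op_graph_def by auto

lemma lim_const': "lim (\<lambda>n. c) = c" by (rule limI[OF tendsto_const])

lemma c1_c2:
  assumes h1: "G ` DA = adj_dom DA A" and h2: "\<forall>\<xi>\<in>DA. adj DA A (G \<xi>) = G (A \<xi>)"
  shows "self_adjoint (S ` DA) B"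
proof -
  have 1: "(u, v) \<in> op_graph (S ` DA) B" if "(u, v) \<in> adj_graph (S ` DA) B" for u v
  proof -
    have a: "(S u, S v) \<in> adj_graph DA A" using that adjB_adjA by blast
    hence "S u \<in> adj_dom DA A" unfolding adj_dom_def by blast
    then obtain \<xi>0 where x0: "\<xi>0 \<in> DA" "S u = G \<xi>0" using h1 by blast
    hence "S u = S (S \<xi>0)" by (simp add: SSG)
    hence u: "u = S \<xi>0" using injS by (simp add: inj_eq)
    have "S v = adj DA A (S u)" using adj_eq[OF a] by simp
    also have "\<dots> = G (A \<xi>0)" using h2 x0 by simp
    also have "\<dots> = S (S (A \<xi>0))" by (simp add: SSG)
    finally have "v = S (A \<xi>0)" using injS by (simp add: inj_eq)
    thus ?thesis unfolding op_graph_iff using u x0 by simp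
  qed
  have 2: "(u, v) \<in> adj_graph (S ` DA) B" if "(u, v) \<in> op_graph (S ` DA) B" for u v
  proof -
    have "u \<in> S ` DA" "v = B u" using that unfolding op_graph_iff by auto
    then obtain \<xi>0 where x0: "\<xi>0 \<in> DA" "u = S \<xi>0" "v = S (A \<xi>0)" by auto
    have "G \<xi>0 \<in> adj_dom DA A" using h1 x0 by blast
    hence "(G \<xi>0, adj DA A (G \<xi>0)) \<in> adj_graph DA A" by (rule adj_in)
    hence "(S u, S v) \<in> adj_graph DA A" using h2 x0 by (simp add: SSG)
    thus ?thesis using adjB_adjA by blast
  qed
  show ?thesis unfolding self_adjoint_def densely_defined_def
  proof (intro conjI closure_SDA set_eqI)
    fix p show "p \<in> adj_graph (S ` DA) B \<longleftrightarrow> p \<in> op_graph (S ` DA) B" using 1 2 by (cases p) blast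
  qed
qed

lemma c2_c3:
  assumes sa: "self_adjoint (S ` DA) B"
  shows "self_adjoint_in_HG G DA A"
proof -
  have gr: "adj_graph (S ` DA) B = op_graph (S ` DA) B" using sa unfolding self_adjoint_def by blast
  have sym: "cinner (S (A \<xi>')) (S \<xi>) = cinner (S \<xi>') (S (A \<xi>))" if "\<xi> \<in> DA" "\<xi>' \<in> DA" for \<xi> \<xi>'
  proof -
    have "(S \<xi>, S (A \<xi>)) \<in> op_graph (S ` DA) B" unfolding op_graph_iff using that by simp
    hence "(S \<xi>, S (A \<xi>)) \<in> adj_graph (S ` DA) B" using gr by simp
    thus ?thesis using that(2) unfolding adjB_iff by blast
  qed
  show ?thesis unfolding self_adjoint_in_HG_def
  proof (intro conjI ballI allI impI)
    fix \<xi> assume x: "\<xi> \<in> DA"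
    show "((\<lambda>_. \<xi>), (\<lambda>_. A \<xi>)) \<in> gadj_graph G DA A"
      unfolding gadj_graph_def gcauchy_def using sym[OF x] by (simp add: ginner_S lim_const' convergent_Cauchy[OF convergent_const])
  next
    fix \<eta> \<zeta> assume h: "(\<eta>, \<zeta>) \<in> gadj_graph G DA A"
    have "Cauchy (\<lambda>n. S (\<eta> n))" "Cauchy (\<lambda>n. S (\<zeta> n))"
      using h unfolding gadj_graph_def gcauchy_def S_def by auto
    then obtain u v where u: "(\<lambda>n. S (\<eta> n)) \<longlonglongrightarrow> u" and v: "(\<lambda>n. S (\<zeta> n)) \<longlonglongrightarrow> v"
      unfolding Cauchy_convergent_iff convergent_def by blast
    have "\<forall>\<xi>\<in>DA. cinner (S (A \<xi>)) u = cinner (S \<xi>) v"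
    proof
      fix \<xi> assume "\<xi> \<in> DA"
      hence "lim (\<lambda>n. cinner (S (A \<xi>)) (S (\<eta> n))) = lim (\<lambda>n. cinner (S \<xi>) (S (\<zeta> n)))"
        using h unfolding gadj_graph_def ginner_S by blast
      moreover have "lim (\<lambda>n. cinner (S (A \<xi>)) (S (\<eta> n))) = cinner (S (A \<xi>)) u"
        by (rule limI[OF tendsto_cinner[OF tendsto_const u]])
      moreover have "lim (\<lambda>n. cinner (S \<xi>) (S (\<zeta> n))) = cinner (S \<xi>) v"
        by (rule limI[OF tendsto_cinner[OF tendsto_const v]])
      ultimately show "cinner (S (A \<xi>)) u = cinner (S \<xi>) v" by simp
    qed
    hence "(u, v) \<in> op_graph (S ` DA) B" using gr adjB_iff by blast
    hence "u \<in> S ` DA" "v = B u" unfolding op_graph_iff by auto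
    then obtain \<xi>0 where x0: "\<xi>0 \<in> DA" "u = S \<xi>0" "v = S (A \<xi>0)" by auto
    show "\<exists>\<xi>\<in>DA. gequiv G \<eta> (\<lambda>_. \<xi>) \<and> gequiv G \<zeta> (\<lambda>_. A \<xi>)"
    proof (intro bexI[OF _ x0(1)] conjI)
      show "gequiv G \<eta> (\<lambda>_. \<xi>0)" unfolding gequiv_def S_def[symmetric]
        using tendsto_diff[OF u tendsto_const[of "S \<xi>0"]] x0 by (simp add: lin_diff[OF LS])
      show "gequiv G \<zeta> (\<lambda>_. A \<xi>0)" unfolding gequiv_def S_def[symmetric]
        using tendsto_diff[OF v tendsto_const[of "S (A \<xi>0)"]] x0 by (simp add: lin_diff[OF LS])
    qed
  qed
qed


lemma c3_sym:
  assumes c3: "self_adjoint_in_HG G DA A" and "\<xi> \<in> DA" "\<xi>' \<in> DA"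
  shows "cinner (S (A \<xi>')) (S \<xi>) = cinner (S \<xi>') (S (A \<xi>))"
proof -
  have "((\<lambda>_. \<xi>), (\<lambda>_. A \<xi>)) \<in> gadj_graph G DA A" using c3 assms(2) unfolding self_adjoint_in_HG_def by blast
  hence "lim (\<lambda>n. ginner G (A \<xi>') \<xi>) = lim (\<lambda>n. ginner G \<xi>' (A \<xi>))"
    using assms(3) unfolding gadj_graph_def by blast
  thus ?thesis by (simp add: lim_const' ginner_S)
qed

lemma approx_S: "\<exists>\<eta>. (\<lambda>n. S (\<eta> n)) \<longlonglongrightarrow> u"
proof -
  have "u \<in> closure (S ` DA)" using closure_SDA by simp
  then obtain f where f: "\<forall>n. f n \<in> S ` DA" "f \<longlonglongrightarrow> u" unfolding closure_sequential by blast
  have "\<forall>n. \<exists>a. f n = S a" using f(1) by blast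
  then obtain \<eta> where e: "\<forall>n. f n = S (\<eta> n)" by metis
  have "(\<lambda>n. S (\<eta> n)) = f" using e by auto
  thus ?thesis using f(2) by auto
qed

lemma c3_Bstar:
  assumes c3: "self_adjoint_in_HG G DA A" and uv: "(u, v) \<in> adj_graph (S ` DA) B"
  shows "\<exists>\<xi>0\<in>DA. u = S \<xi>0 \<and> v = S (A \<xi>0)"
proof -
  obtain \<eta> where u: "(\<lambda>n. S (\<eta> n)) \<longlonglongrightarrow> u" using approx_S by blast
  obtain \<zeta> where v: "(\<lambda>n. S (\<zeta> n)) \<longlonglongrightarrow> v" using approx_S by blast
  have "(\<eta>, \<zeta>) \<in> gadj_graph G DA A"
    unfolding gadj_graph_def gcauchy_def S_def[symmetric]
  proof (intro CollectI case_prodI conjI ballI)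
    show "Cauchy (\<lambda>n. S (\<eta> n))" using u by (rule LIMSEQ_imp_Cauchy)
    show "Cauchy (\<lambda>n. S (\<zeta> n))" using v by (rule LIMSEQ_imp_Cauchy)
    fix \<xi> assume x: "\<xi> \<in> DA"
    have "lim (\<lambda>n. ginner G (A \<xi>) (\<eta> n)) = cinner (S (A \<xi>)) u"
      unfolding ginner_S by (rule limI[OF tendsto_cinner[OF tendsto_const u]])
    also have "\<dots> = cinner (S \<xi>) v" using uv x unfolding adjB_iff by blast
    also have "\<dots> = lim (\<lambda>n. ginner G \<xi> (\<zeta> n))"
      unfolding ginner_S by (rule limI[OF tendsto_cinner[OF tendsto_const v], symmetric])
    finally show "lim (\<lambda>n. ginner G (A \<xi>) (\<eta> n)) = lim (\<lambda>n. ginner G \<xi> (\<zeta> n))" .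
  qed
  then obtain \<xi>0 where x0: "\<xi>0 \<in> DA" "gequiv G \<eta> (\<lambda>_. \<xi>0)" "gequiv G \<zeta> (\<lambda>_. A \<xi>0)"
    using c3 unfolding self_adjoint_in_HG_def by blast
  have "(\<lambda>n. S (\<eta> n) - S \<xi>0) \<longlonglongrightarrow> 0" using x0(2) unfolding gequiv_def S_def[symmetric]
    by (simp add: lin_diff[OF LS])
  hence "(\<lambda>n. S (\<eta> n)) \<longlonglongrightarrow> S \<xi>0" by (simp add: LIM_zero_iff)
  hence "u = S \<xi>0" using u LIMSEQ_unique by blast
  moreover have "(\<lambda>n. S (\<zeta> n) - S (A \<xi>0)) \<longlonglongrightarrow> 0" using x0(3) unfolding gequiv_def S_def[symmetric]
    by (simp add: lin_diff[OF LS])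
  hence "(\<lambda>n. S (\<zeta> n)) \<longlonglongrightarrow> S (A \<xi>0)" by (simp add: LIM_zero_iff)
  hence "v = S (A \<xi>0)" using v LIMSEQ_unique by blast
  ultimately show ?thesis using x0(1) by blast
qed

lemma A_zero: "A 0 = 0"
proof -
  have "0 \<in> DA" using csubDA unfolding csubspace_def by blast
  hence "A (scaleC 0 0) = scaleC 0 (A 0)" by (rule A_scaleC)
  thus ?thesis by simp
qed

definition F where "F \<xi> = S (A \<xi>) + scaleC \<i> (S \<xi>)"

lemma F_diff: "\<xi> \<in> DA \<Longrightarrow> \<xi>' \<in> DA \<Longrightarrow> F \<xi> - F \<xi>' = F (\<xi> - \<xi>')"
  unfolding F_def by (simp add: A_diff lin_diff[OF LS] scaleC_diff_right)

lemma F_norm: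
  assumes c3: "self_adjoint_in_HG G DA A" and x: "\<xi> \<in> DA"
  shows "(norm (F \<xi>))^2 = (norm (S (A \<xi>)))^2 + (norm (S \<xi>))^2"
proof -
  define a where "a = S (A \<xi>)"
  define b where "b = S \<xi>"
  have ab: "cinner a b = cinner b a" unfolding a_def b_def using c3_sym[OF c3 x x] .
  have "complex_of_real ((norm (F \<xi>))^2) = cinner (a + scaleC \<i> b) (a + scaleC \<i> b)"
    unfolding F_def a_def b_def by (simp add: cinner_self)
  also have "\<dots> = cinner a a + cinner b b + \<i> * cinner a b - \<i> * cinner b a"
    by (simp add: cinner_add_left cinner_add_right cinner_scaleC_left cinner_scaleC_right algebra_simps)
  also have "\<dots> = complex_of_real ((norm a)^2 + (norm b)^2)" by (simp add: ab cinner_self)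
  finally show ?thesis unfolding a_def b_def by (simp only: of_real_eq_iff)
qed

lemma Cauchy_dom:
  assumes "Cauchy X" "\<And>m n. dist (Y m) (Y n) \<le> dist (X m) (X n)"
  shows "Cauchy Y"
  unfolding Cauchy_def
proof (intro allI impI)
  fix e :: real assume "e > 0"
  then obtain M where "\<forall>m\<ge>M. \<forall>n\<ge>M. dist (X m) (X n) < e" using assms(1) unfolding Cauchy_def by blast
  thus "\<exists>M. \<forall>m\<ge>M. \<forall>n\<ge>M. dist (Y m) (Y n) < e" using assms(2) by (meson le_less_trans)
qed

lemma range_F:
  assumes c3: "self_adjoint_in_HG G DA A"
  shows "F ` DA = UNIV"
proof (rule ortho_full)
  show "csubspace (F ` DA)" unfolding csubspace_def
  proof (intro conjI ballI allI)
    have "0 \<in> DA" using csubDA unfolding csubspace_def by blast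
    moreover have "F 0 = 0" unfolding F_def by (simp add: A_zero lin_zero[OF LS])
    ultimately show "0 \<in> F ` DA" by (metis image_eqI)
  next
    fix x y assume "x \<in> F ` DA" "y \<in> F ` DA"
    then obtain a b where ab: "a \<in> DA" "b \<in> DA" "x = F a" "y = F b" by blast
    have "F (a + b) = x + y" unfolding ab F_def
      by (simp add: A_add[OF ab(1,2)] lin_add[OF LS] scaleC_add_right)
    thus "x + y \<in> F ` DA" using DA_add[OF ab(1,2)] by (metis image_eqI)
  next
    fix x c assume "x \<in> F ` DA"
    then obtain a where a: "a \<in> DA" "x = F a" by blast
    have "F (scaleC c a) = scaleC c x" unfolding a F_def
      by (simp add: A_scaleC[OF a(1)] lin_scaleC[OF LS] scaleC_add_right scaleC_scaleC mult.commute)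
    thus "scaleC c x \<in> F ` DA" using DA_scaleC[OF a(1)] by (metis image_eqI)
  qed
next
  show "closed (F ` DA)" unfolding closed_sequential_limits
  proof (intro allI impI, elim conjE)
    fix x l assume xs: "\<forall>n. x n \<in> F ` DA" and xl: "x \<longlonglongrightarrow> l"
    have "\<forall>n. \<exists>a. a \<in> DA \<and> x n = F a" using xs by blast
    then obtain \<xi> where xi: "\<And>n. \<xi> n \<in> DA" "\<And>n. x n = F (\<xi> n)" by metis
    have cx: "Cauchy x" using xl by (rule LIMSEQ_imp_Cauchy)
    have d1: "dist (S (\<xi> m)) (S (\<xi> n)) \<le> dist (x m) (x n)"
      and d2: "dist (S (A (\<xi> m))) (S (A (\<xi> n))) \<le> dist (x m) (x n)" for m n
    proof -
      have dm: "\<xi> m - \<xi> n \<in> DA" using DA_diff xi(1) by blast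
      have eq: "(norm (x m - x n))^2 = (norm (S (A (\<xi> m)) - S (A (\<xi> n))))^2 + (norm (S (\<xi> m) - S (\<xi> n)))^2"
        using F_norm[OF c3 dm] unfolding xi(2) F_diff[OF xi(1) xi(1)]
        by (simp add: A_diff[OF xi(1) xi(1)] lin_diff[OF LS])
      have "(norm (S (\<xi> m) - S (\<xi> n)))^2 \<le> (norm (x m - x n))^2" using eq by simp
      thus "dist (S (\<xi> m)) (S (\<xi> n)) \<le> dist (x m) (x n)" unfolding dist_norm
        by (rule power2_le_imp_le) simp
      have "(norm (S (A (\<xi> m)) - S (A (\<xi> n))))^2 \<le> (norm (x m - x n))^2" using eq by simp
      thus "dist (S (A (\<xi> m))) (S (A (\<xi> n))) \<le> dist (x m) (x n)" unfolding dist_norm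
        by (rule power2_le_imp_le) simp
    qed
    have "Cauchy (\<lambda>n. S (\<xi> n))" by (rule Cauchy_dom[OF cx d1])
    then obtain u where u: "(\<lambda>n. S (\<xi> n)) \<longlonglongrightarrow> u" unfolding Cauchy_convergent_iff convergent_def by blast
    have "Cauchy (\<lambda>n. S (A (\<xi> n)))" by (rule Cauchy_dom[OF cx d2])
    then obtain v where v: "(\<lambda>n. S (A (\<xi> n))) \<longlonglongrightarrow> v" unfolding Cauchy_convergent_iff convergent_def by blast
    have "(u, v) \<in> adj_graph (S ` DA) B" unfolding adjB_iff
    proof
      fix \<zeta> assume z: "\<zeta> \<in> DA"
      have "(\<lambda>n. cinner (S (A \<zeta>)) (S (\<xi> n))) \<longlonglongrightarrow> cinner (S (A \<zeta>)) u"
        by (rule tendsto_cinner[OF tendsto_const u])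
      moreover have "(\<lambda>n. cinner (S (A \<zeta>)) (S (\<xi> n))) = (\<lambda>n. cinner (S \<zeta>) (S (A (\<xi> n))))"
        using c3_sym[OF c3 xi(1) z] by simp
      moreover have "(\<lambda>n. cinner (S \<zeta>) (S (A (\<xi> n)))) \<longlonglongrightarrow> cinner (S \<zeta>) v"
        by (rule tendsto_cinner[OF tendsto_const v])
      ultimately show "cinner (S (A \<zeta>)) u = cinner (S \<zeta>) v" using LIMSEQ_unique by metis
    qed
    then obtain \<xi>0 where x0: "\<xi>0 \<in> DA" "u = S \<xi>0" "v = S (A \<xi>0)" using c3_Bstar[OF c3] by blast
    have "x \<longlonglongrightarrow> v + scaleC \<i> u" unfolding xi(2) F_def
      by (intro tendsto_add v lin_bnd_tendsto[OF lin_scC bnd_scC u])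
    hence "l = F \<xi>0" using xl LIMSEQ_unique x0 unfolding F_def by blast
    thus "l \<in> F ` DA" using x0(1) by blast
  qed
next
  fix z assume h: "\<forall>m\<in>F ` DA. cinner m z = 0"
  have "(z, scaleC \<i> z) \<in> adj_graph (S ` DA) B" unfolding adjB_iff
  proof
    fix \<xi> assume "\<xi> \<in> DA"
    hence "cinner (F \<xi>) z = 0" using h by blast
    hence "cinner (S (A \<xi>)) z - \<i> * cinner (S \<xi>) z = 0"
      unfolding F_def by (simp add: cinner_add_left cinner_scaleC_left)
    thus "cinner (S (A \<xi>)) z = cinner (S \<xi>) (scaleC \<i> z)" by (simp add: cinner_scaleC_right)
  qed
  then obtain \<xi>0 where x0: "\<xi>0 \<in> DA" "z = S \<xi>0" "scaleC \<i> z = S (A \<xi>0)" using c3_Bstar[OF c3] by blast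
  have "cinner (S (A \<xi>0)) (S \<xi>0) = cinner (S \<xi>0) (S (A \<xi>0))" using c3_sym[OF c3 x0(1) x0(1)] .
  hence "cinner (scaleC \<i> z) z = cinner z (scaleC \<i> z)" using x0 by simp
  hence "- \<i> * cinner z z = \<i> * cinner z z" by (simp add: cinner_scaleC_left cinner_scaleC_right)
  hence "cinner z z = 0" by simp
  thus "z = 0" by simp
qed

lemma S_surj:
  assumes c3: "self_adjoint_in_HG G DA A"
  shows "\<exists>p. z = S p"
proof -
  have "z \<in> F ` DA" using range_F[OF c3] by simp
  then obtain \<xi> where "\<xi> \<in> DA" "z = F \<xi>" by blast
  hence "z = S (A \<xi> + scaleC \<i> \<xi>)" unfolding F_def by (simp add: lin_add[OF LS] lin_scaleC[OF LS])
  thus ?thesis by blast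
qed

lemma c3_c4:
  assumes c3: "self_adjoint_in_HG G DA A"
  shows "G ` DA = dom_Ginv_adj G DA A \<and> (\<forall>\<xi>\<in>DA. adj DA A (G \<xi>) = G (A \<xi>))"
proof -
  have gr: "(G \<xi>, G (A \<xi>)) \<in> adj_graph DA A" if x: "\<xi> \<in> DA" for \<xi>
    unfolding adj_graph_def
  proof (intro CollectI case_prodI ballI)
    fix \<xi>' assume x': "\<xi>' \<in> DA"
    have "cinner (A \<xi>') (G \<xi>) = cinner (S (A \<xi>')) (S \<xi>)" by (simp add: Sinner)
    also have "\<dots> = cinner (S \<xi>') (S (A \<xi>))" by (rule c3_sym[OF c3 x x'])
    also have "\<dots> = cinner \<xi>' (G (A \<xi>))" by (simp add: Sinner)
    finally show "cinner (A \<xi>') (G \<xi>) = cinner \<xi>' (G (A \<xi>))" .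
  qed
  have adjG: "adj DA A (G \<xi>) = G (A \<xi>)" if "\<xi> \<in> DA" for \<xi> using adj_eq[OF gr[OF that]] .
  have sub1: "G ` DA \<subseteq> dom_Ginv_adj G DA A"
  proof
    fix y assume "y \<in> G ` DA"
    then obtain \<xi> where x: "\<xi> \<in> DA" "y = G \<xi>" by blast
    have "y \<in> adj_dom DA A" using gr[OF x(1)] x(2) unfolding adj_dom_def by blast
    moreover have "adj DA A y \<in> range G" using adjG[OF x(1)] x(2) by simp
    ultimately show "y \<in> dom_Ginv_adj G DA A" unfolding dom_Ginv_adj_def by blast
  qed
  have sub2: "dom_Ginv_adj G DA A \<subseteq> G ` DA"
  proof
    fix \<zeta> assume "\<zeta> \<in> dom_Ginv_adj G DA A"
    hence z: "\<zeta> \<in> adj_dom DA A" "adj DA A \<zeta> \<in> range G" unfolding dom_Ginv_adj_def by auto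
    then obtain w where w: "adj DA A \<zeta> = G w" by blast
    obtain p where p: "\<zeta> = S p" using S_surj[OF c3] by blast
    have "(S p, S (S w)) \<in> adj_graph DA A" using adj_in[OF z(1)] w p by (simp add: SSG)
    hence "(p, S w) \<in> adj_graph (S ` DA) B" using adjB_adjA by blast
    then obtain \<xi>0 where "\<xi>0 \<in> DA" "p = S \<xi>0" using c3_Bstar[OF c3] by blast
    hence "\<zeta> = G \<xi>0" "\<xi>0 \<in> DA" using p by (simp_all add: SSG)
    thus "\<zeta> \<in> G ` DA" by blast
  qed
  show ?thesis using sub1 sub2 adjG by blast
qed

end

theorem proposition5p14:
  fixes DA :: "'a::complex_hilbert set" and A :: "'a \<Rightarrow> 'a" and G :: "'a \<Rightarrow> 'a"
  assumes closedA: "closed_op DA A"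
    and denseA: "densely_defined DA"
    and metricG: "bounded_metric_op G"
  defines "c1 \<equiv> G ` DA = adj_dom DA A \<and> (\<forall>\<xi>\<in>DA. adj DA A (G \<xi>) = G (A \<xi>))"
    and "c2 \<equiv> self_adjoint (op_sqrt G ` DA)
               (\<lambda>y. op_sqrt G (A (inv_into UNIV (op_sqrt G) y)))"
    and "c3 \<equiv> self_adjoint_in_HG G DA A"
    and "c4 \<equiv> G ` DA = dom_Ginv_adj G DA A \<and> (\<forall>\<xi>\<in>DA. adj DA A (G \<xi>) = G (A \<xi>))"
  shows "(c1 \<longrightarrow> c2) \<and> (c2 \<longrightarrow> c3) \<and> (c3 \<longrightarrow> c4) \<and>
         (adj DA A ` adj_dom DA A \<subseteq> range G \<longrightarrow> (c1 \<longleftrightarrow> c2) \<and> (c2 \<longleftrightarrow> c3) \<and> (c3 \<longleftrightarrow> c4))"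
proof -
  interpret mctx DA A G using closedA denseA metricG by unfold_locales
  have e2: "c2 = self_adjoint (S ` DA) B" unfolding c2_def S_def B_def ..
  have i12: "c1 \<longrightarrow> c2" unfolding c1_def e2 using c1_c2 by blast
  have i23: "c2 \<longrightarrow> c3" unfolding e2 c3_def using c2_c3 by blast
  have i34: "c3 \<longrightarrow> c4" unfolding c3_def c4_def using c3_c4 by blast
  have i41: "adj DA A ` adj_dom DA A \<subseteq> range G \<longrightarrow> c4 \<longrightarrow> c1"
  proof (intro impI)
    assume r: "adj DA A ` adj_dom DA A \<subseteq> range G" and h4: c4
    have "dom_Ginv_adj G DA A = adj_dom DA A" using r unfolding dom_Ginv_adj_def by blast
    thus c1 using h4 unfolding c1_def c4_def by simp
  qed
  show ?thesis using i12 i23 i34 i41 by blast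
qed

end
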